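(* Let $K$ be any field and $m,d\geq 1$. The quadruple $(G_{m\wr d}, B_m^d, N_{m\wr d}, \Sigma_m\wr\Sigma_d)$ is a generalized Tits system in the sense of Iwahori. More precisely: $B_m^d\cap N_{m\wr d}=T_m^d$ (the diagonal matrices of $\mathrm{GL}_{md}(K)$) is normal in $N_{m\wr d}$, $N_{m\wr d}/T_m^d\cong \Sigma_m\wr\Sigma_d\cong W_0\rtimes\Omega$ with $W_0=\Sigma_m^d$ (generated by the involutions $s_a^{(j)}$, $1\le a\le m-1$, $1\le j\le d$) and $\Omega=\{1\}\wr\Sigma_d\cong\Sigma_d$, every $t\in\Omega$ normalizes $B_m^d$ and the set $\{s_a^{(j)}\}$, $B_m^d t\neq B_m^d$ for $t\ne 1$, and for every generator $s=s_a^{(j)}$ and every $w\in\Sigma_m\wr\Sigma_d$ one has $sB_m^dw\subseteq B_m^dswB_m^d\cup B_m^dwB_m^d$ and $sB_m^d\neq B_m^d s$.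
   Context: Notation: $\Sigma_n$ is the symmetric group. The wreath product $\Sigma_m\wr\Sigma_d=\Sigma_m^d\rtimes\Sigma_d$ has multiplication determined by $w(g_1,\dots,g_d)=(g_{w^{-1}(1)},\dots,g_{w^{-1}(d)})w$; its elements are written $(w_i)_i\sigma$ with $w_i\in\Sigma_m$, $\sigma\in\Sigma_d$. For $g\in\Sigma_m$, $g^{(j)}$ denotes $(1,\dots,1,g,1,\dots,1)$ ($g$ in position $j$); $s_a=(a\ a{+}1)\in\Sigma_m$, and $t_k=(k\ k{+}1)\in\Sigma_d$. We regard $\Sigma_m\wr\Sigma_d\subseteq\Sigma_{md}$ via $(w_i)_i\sigma:(j-1)m+a\mapsto(\sigma(j)-1)m+w_{\sigma(j)}(a)$ ($1\le j\le d$, $1\le a\le m$). Over a field $K$: $\mathrm{GL}_n=\mathrm{GL}_n(K)$, $B_n$ its upper triangular matrices, $T_n$ its diagonal matrices. $N_{m\wr d}\subseteq\mathrm{GL}_{md}$ is the group of monomial matrices whose underlying permutation lies in $\Sigma_m\wr\Sigma_d\subseteq\Sigma_{md}$; $B_m^d\subseteq\mathrm{GL}_{md}$ is the group of block diagonal matrices $\mathrm{diag}(b_1,\dots,b_d)$ with $b_i\in B_m$; $G_{m\wr d}:=\langle B_m^d,N_{m\wr d}\rangle\subseteq\mathrm{GL}_{md}$. Elements of $\Sigma_m\wr\Sigma_d$ are identified with cosets in $N_{m\wr d}/T_m^d$, so expressions like $BwB$ are well defined. A generalized Tits system (Iwahori) is a quadruple $(G,B,N,W)$ with $G=\langle B,N\rangle$,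 $B\cap N$ normal in $N$, $W=N/(B\cap N)\cong W_0\rtimes\Omega$ where $W_0$ is generated by involutions $s_i$ ($i\in I$), every $t\in\Omega$ normalizes $B$ and $\{s_i\}$, $Bt\ne B$ unless $t=1$, and for all $s=s_i$, $w\in W$: $sBw\subseteq BswB\cup BwB$ and $sB\ne Bs$. *)

theory Defs
  imports "Jordan_Normal_Form.Matrix" "HOL-Algebra.Generated_Groups" "HOL-Algebra.Coset"
    "HOL-Combinatorics.Permutations"
begin

text \<open>Conventions: indices are 0-based.  The 1-based position (j-1)m+a of the paper
  (1 \<le> j \<le> d, 1 \<le> a \<le> m) is the 0-based position j*m+a with j < d, a < m.
  Permutations of {0..<n} are functions nat \<Rightarrow> nat that permute {..<n}
  (identity outside), composed by function composition.\<close>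

text \<open>The wreath product Sigma_m wr Sigma_d, regarded as a subgroup of Sigma_{md}:
  (w_i)_i sigma maps j*m+a to sigma(j)*m + w_{sigma(j)}(a).\<close>
definition wreath_perms :: "nat \<Rightarrow> nat \<Rightarrow> (nat \<Rightarrow> nat) set" where
  "wreath_perms m d = {\<pi>. \<pi> permutes {..<m*d} \<and>
     (\<exists>\<sigma> w. \<sigma> permutes {..<d} \<and> (\<forall>i<d. w i permutes {..<m}) \<and>
        (\<forall>j<d. \<forall>a<m. \<pi> (j*m+a) = \<sigma> j * m + w (\<sigma> j) a))}"

definition wreath_grp :: "nat \<Rightarrow> nat \<Rightarrow> (nat \<Rightarrow> nat) monoid" where
  "wreath_grp m d = \<lparr>carrier = wreath_perms m d, mult = (\<circ>), one = id\<rparr>"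

definition W0_perms :: "nat \<Rightarrow> nat \<Rightarrow> (nat \<Rightarrow> nat) set" where
  "W0_perms m d = {\<pi>. \<pi> permutes {..<m*d} \<and>
     (\<exists>w. (\<forall>i<d. w i permutes {..<m}) \<and> (\<forall>j<d. \<forall>a<m. \<pi> (j*m+a) = j * m + w j a))}"

definition Omega_perms :: "nat \<Rightarrow> nat \<Rightarrow> (nat \<Rightarrow> nat) set" where
  "Omega_perms m d = {\<pi>. \<pi> permutes {..<m*d} \<and>
     (\<exists>\<sigma>. \<sigma> permutes {..<d} \<and> (\<forall>j<d. \<forall>a<m. \<pi> (j*m+a) = \<sigma> j * m + a))}"

definition simple_refls :: "nat \<Rightarrow> nat \<Rightarrow> (nat \<Rightarrow> nat) set" where
  "simple_refls m d = {Transposition.transpose (j*m+a) (j*m+a+1) | j a. j < d \<and> a + 1 < m}"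

definition GL_grp :: "nat \<Rightarrow> 'a::field mat monoid" where
  "GL_grp n = \<lparr>carrier = {A \<in> carrier_mat n n. invertible_mat A}, mult = (*), one = 1\<^sub>m n\<rparr>"

definition perm_matrix :: "nat \<Rightarrow> (nat \<Rightarrow> nat) \<Rightarrow> 'a::field mat" where
  "perm_matrix n \<pi> = mat n n (\<lambda>(i,k). if i = \<pi> k then 1 else 0)"

definition T_md :: "nat \<Rightarrow> nat \<Rightarrow> 'a::field mat set" where
  "T_md m d = {A \<in> carrier_mat (m*d) (m*d). invertible_mat A \<and> diagonal_mat A}"

definition B_md :: "nat \<Rightarrow> nat \<Rightarrow> 'a::field mat set" where
  "B_md m d = {A \<in> carrier_mat (m*d) (m*d). invertible_mat A \<and>
     (\<forall>i<m*d. \<forall>j<m*d. A $$ (i,j) \<noteq> 0 \<longrightarrow> i div m = j div m \<and> i \<le> j)}"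

definition N_md :: "nat \<Rightarrow> nat \<Rightarrow> 'a::field mat set" where
  "N_md m d = {perm_matrix (m*d) \<pi> * D | \<pi> D. \<pi> \<in> wreath_perms m d \<and> D \<in> T_md m d}"

definition G_md :: "nat \<Rightarrow> nat \<Rightarrow> 'a::field mat set" where
  "G_md m d = generate (GL_grp (m*d)) (B_md m d \<union> N_md m d)"

definition N_grp :: "nat \<Rightarrow> nat \<Rightarrow> 'a::field mat monoid" where
  "N_grp m d = (GL_grp (m*d)) \<lparr>carrier := N_md m d\<rparr>"

definition G_grp :: "nat \<Rightarrow> nat \<Rightarrow> 'a::field mat monoid" where
  "G_grp m d = (GL_grp (m*d)) \<lparr>carrier := G_md m d\<rparr>"

definition triple_prod :: "'a::field mat set \<Rightarrow> 'a mat set \<Rightarrow> 'a mat set \<Rightarrow> 'a mat set" where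
  "triple_prod X Y Z = {x * y * z | x y z. x \<in> X \<and> y \<in> Y \<and> z \<in> Z}"

definition set_prod :: "'a::field mat set \<Rightarrow> 'a mat set \<Rightarrow> 'a mat set" where
  "set_prod X Y = {x * y | x y. x \<in> X \<and> y \<in> Y}"

end

theory Submission
  imports Defs "Jordan_Normal_Form.Determinant"
begin


abbreviation iv :: "(nat \<Rightarrow> nat) \<Rightarrow> nat \<Rightarrow> nat" where "iv \<equiv> Hilbert_Choice.inv"

lemma sum_single:
  fixes f :: "nat \<Rightarrow> 'b::comm_monoid_add"
  assumes "c < n" "\<And>l. l < n \<Longrightarrow> l \<noteq> c \<Longrightarrow> f l = 0"
  shows "(\<Sum>l\<in>{0..<n}. f l) = f c"
proof -
  have "(\<Sum>l\<in>{0..<n}. f l) = f c + (\<Sum>l\<in>{0..<n} - {c}. f l)"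
    using assms(1) by (subst sum.remove[of _ c]) auto
  also have "(\<Sum>l\<in>{0..<n} - {c}. f l) = 0" using assms(2) by (intro sum.neutral) auto
  finally show ?thesis by simp
qed

lemma mult_entry:
  "A \<in> carrier_mat n n \<Longrightarrow> B \<in> carrier_mat n n \<Longrightarrow> i < n \<Longrightarrow> k < n \<Longrightarrow>
   (A * B) $$ (i,k) = (\<Sum>l\<in>{0..<n}. A $$ (i,l) * B $$ (l,k))"
  by (simp add: scalar_prod_def)

lemma perm_matrix_carrier[simp]: "perm_matrix n \<pi> \<in> carrier_mat n n"
  by (simp add: perm_matrix_def)

lemma perm_matrix_index[simp]:
  "i < n \<Longrightarrow> k < n \<Longrightarrow> perm_matrix n \<pi> $$ (i,k) = (if i = \<pi> k then 1 else 0)"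
  by (simp add: perm_matrix_def)

lemma perm_mult_left:
  assumes p: "\<pi> permutes {..<n}" and A: "A \<in> carrier_mat n n" and ik: "i < n" "k < n"
  shows "(perm_matrix n \<pi> * A) $$ (i,k) = A $$ (iv \<pi> i, k)"
proof -
  have iv: "iv \<pi> i < n" using p ik permutes_inv permutes_in_image by fastforce
  have "(perm_matrix n \<pi> * A) $$ (i,k) = (\<Sum>l\<in>{0..<n}. perm_matrix n \<pi> $$ (i,l) * A $$ (l,k))"
    using A ik by (intro mult_entry) auto
  also have "\<dots> = perm_matrix n \<pi> $$ (i,iv \<pi> i) * A $$ (iv \<pi> i,k)"
    using ik iv by (intro sum_single) (auto simp: permutes_inverses[OF p])
  finally show ?thesis using ik iv by (simp add: permutes_inverses[OF p])
qed

lemma perm_mult_right: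
  assumes p: "\<pi> permutes {..<n}" and A: "A \<in> carrier_mat n n" and ik: "i < n" "k < n"
  shows "(A * perm_matrix n \<pi>) $$ (i,k) = A $$ (i, \<pi> k)"
proof -
  have iv: "\<pi> k < n" using p ik permutes_in_image by fastforce
  have "(A * perm_matrix n \<pi>) $$ (i,k) = (\<Sum>l\<in>{0..<n}. A $$ (i,l) * perm_matrix n \<pi> $$ (l,k))"
    using A ik by (intro mult_entry) auto
  also have "\<dots> = A $$ (i,\<pi> k) * perm_matrix n \<pi> $$ (\<pi> k, k)"
    using ik iv by (intro sum_single) auto
  finally show ?thesis using ik iv by simp
qed

lemma perm_matrix_comp:
  assumes p: "\<pi> permutes {..<n}" and r: "\<rho> permutes {..<n}"
  shows "perm_matrix n \<pi> * perm_matrix n \<rho> = perm_matrix n (\<pi> \<circ> \<rho>)"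
proof (rule eq_matI)
  fix i k assume ik: "i < dim_row (perm_matrix n (\<pi> \<circ> \<rho>))" "k < dim_col (perm_matrix n (\<pi> \<circ> \<rho>))"
  then have ik: "i < n" "k < n" by (auto simp: perm_matrix_def)
  show "(perm_matrix n \<pi> * perm_matrix n \<rho>) $$ (i,k) = perm_matrix n (\<pi> \<circ> \<rho>) $$ (i,k)"
  proof -
    have "(perm_matrix n \<pi> * perm_matrix n \<rho>) $$ (i,k) = perm_matrix n \<rho> $$ (iv \<pi> i, k)"
      by (rule perm_mult_left[OF p perm_matrix_carrier ik])
    also have "\<dots> = (if iv \<pi> i = \<rho> k then 1 else 0)"
      using ik p permutes_inv[OF p] permutes_in_image by (subst perm_matrix_index) fastforce+
    also have "\<dots> = perm_matrix n (\<pi> \<circ> \<rho>) $$ (i,k)"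
      using ik by (auto simp: permutes_inverses[OF p] permutes_inv_eq[OF p])
    finally show ?thesis .
  qed
qed (auto simp: perm_matrix_def)

lemma perm_matrix_id: "perm_matrix n id = 1\<^sub>m n"
  by (rule eq_matI) (auto simp: perm_matrix_def)

lemma invertible_of_right_inv:
  fixes A :: "'a::field mat"
  assumes "A \<in> carrier_mat n n" "B \<in> carrier_mat n n" "A * B = 1\<^sub>m n"
  shows "invertible_mat A"
proof -
  have "B * A = 1\<^sub>m n" using mat_mult_left_right_inverse assms by blast
  then show ?thesis using assms unfolding invertible_mat_def inverts_mat_def square_mat.simps
    by (metis carrier_matD)
qed

lemma perm_matrix_invertible:
  assumes p: "\<pi> permutes {..<n}"
  shows "invertible_mat (perm_matrix n \<pi> :: 'a::field mat)"
  using perm_matrix_comp[OF p permutes_inv[OF p]] permutes_inv_o(1)[OF p]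
  by (intro invertible_of_right_inv[where B = "perm_matrix n (iv \<pi>)"]) (auto simp: perm_matrix_id)

lemma invertible_inv_ex:
  fixes A :: "'a::field mat"
  assumes "A \<in> carrier_mat n n" "invertible_mat A"
  shows "\<exists>B \<in> carrier_mat n n. A * B = 1\<^sub>m n \<and> B * A = 1\<^sub>m n"
proof -
  obtain B where B: "A * B = 1\<^sub>m n" "B * A = 1\<^sub>m (dim_row B)"
    using assms unfolding invertible_mat_def inverts_mat_def by auto
  have "dim_col B = n" using arg_cong[OF B(1), of dim_col] by simp
  moreover have "dim_row B = n" using arg_cong[OF B(2), of dim_col] assms by simp
  ultimately show ?thesis using B by (intro bexI[of _ B]) auto
qed

lemma invertible_mult:
  fixes A :: "'a::field mat"
  assumes "A \<in> carrier_mat n n" "B \<in> carrier_mat n n" "invertible_mat A" "invertible_mat B"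
  shows "invertible_mat (A * B)"
proof -
  obtain A' where A': "A' \<in> carrier_mat n n" "A * A' = 1\<^sub>m n" using invertible_inv_ex assms by blast
  obtain B' where B': "B' \<in> carrier_mat n n" "B * B' = 1\<^sub>m n" using invertible_inv_ex assms by blast
  have "(A * B) * (B' * A') = A * (B * (B' * A'))" using assms A' B'
    by (intro assoc_mult_mat) auto
  also have "\<dots> = A * ((B * B') * A')" using assms A' B'
    by (subst assoc_mult_mat[of B n n B' n A' n]) auto
  also have "\<dots> = 1\<^sub>m n" using assms A' B' by simp
  finally show ?thesis using assms A' B' by (intro invertible_of_right_inv[of _ n "B' * A'"]) auto
qed

lemma invertible_det_nz:
  fixes A :: "'a::field mat"
  assumes "A \<in> carrier_mat n n" "invertible_mat A"
  shows "det A \<noteq> 0"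
proof -
  obtain B where B: "B \<in> carrier_mat n n" "A * B = 1\<^sub>m n" using invertible_inv_ex assms by blast
  have "det A * det B = 1" using det_mult[OF assms(1) B(1)] B by simp
  then show ?thesis by auto
qed

lemma diag_nonzero:
  fixes A :: "'a::field mat"
  assumes A: "A \<in> carrier_mat n n" "invertible_mat A"
    and ut: "\<And>i k. i < n \<Longrightarrow> k < n \<Longrightarrow> k < i \<Longrightarrow> A $$ (i,k) = 0"
    and i: "i < n"
  shows "A $$ (i,i) \<noteq> 0"
proof -
  have "upper_triangular A" using A ut unfolding upper_triangular_def by auto
  then have "det A = prod_list (diag_mat A)" using det_upper_triangular A by blast
  then have "0 \<notin> set (diag_mat A)" using invertible_det_nz[OF A] by (auto simp: prod_list_zero_iff)
  then show ?thesis using A i unfolding diag_mat_def by auto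
qed

definition respx :: "(nat \<Rightarrow> nat \<Rightarrow> bool) \<Rightarrow> nat \<Rightarrow> 'a::field mat \<Rightarrow> bool" where
  "respx R n A \<longleftrightarrow> (\<forall>i<n. \<forall>k<n. A $$ (i,k) \<noteq> 0 \<longrightarrow> R i k)"

lemma respx_mult:
  fixes A B :: "'a::field mat"
  assumes tr: "\<And>i j k. R i j \<Longrightarrow> R j k \<Longrightarrow> R i k"
    and A: "A \<in> carrier_mat n n" "respx R n A" and B: "B \<in> carrier_mat n n" "respx R n B"
  shows "respx R n (A * B)"
  unfolding respx_def
proof (intro allI impI)
  fix i k assume ik: "i < n" "k < n" and nz: "(A * B) $$ (i,k) \<noteq> 0"
  then have "(\<Sum>l\<in>{0..<n}. A $$ (i,l) * B $$ (l,k)) \<noteq> 0" using mult_entry[OF A(1) B(1) ik] by simp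
  then obtain l where l: "l < n" "A $$ (i,l) * B $$ (l,k) \<noteq> 0"
    by (metis (no_types, lifting) atLeastLessThan_iff sum.neutral)
  then have "R i l" "R l k" using A(2) B(2) ik unfolding respx_def by auto
  then show "R i k" by (rule tr)
qed

lemma respx_inv:
  fixes A X :: "'a::field mat"
  assumes tr: "\<And>i j k. R i j \<Longrightarrow> R j k \<Longrightarrow> R i k"
    and rf: "\<And>i. R i i" and le: "\<And>i k. R i k \<Longrightarrow> i \<le> k"
    and A: "A \<in> carrier_mat n n" "respx R n A" and dg: "\<And>l. l < n \<Longrightarrow> A $$ (l,l) \<noteq> 0"
    and X: "X \<in> carrier_mat n n" "X * A = 1\<^sub>m n"
  shows "respx R n X"
  unfolding respx_def
proof (intro allI impI)
  fix i k assume i: "i < n" and k: "k < n" and nz: "X $$ (i,k) \<noteq> 0"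
  have main: "\<forall>l. l < n \<longrightarrow> \<not> R i l \<longrightarrow> X $$ (i,l) = 0" for l0 :: nat
  proof -
    have "l < n \<longrightarrow> \<not> R i l \<longrightarrow> X $$ (i,l) = 0" for l
    proof (induction l rule: less_induct)
      case (less l)
      show ?case
      proof (intro impI)
        assume l: "l < n" and nR: "\<not> R i l"
        then have il: "i \<noteq> l" using rf by auto
        have "0 = (X * A) $$ (i,l)" using X(2) i l il by simp
        also have "\<dots> = (\<Sum>l'\<in>{0..<n}. X $$ (i,l') * A $$ (l',l))" using mult_entry[OF X(1) A(1) i l] .
        also have "\<dots> = X $$ (i,l) * A $$ (l,l)"
        proof (rule sum_single[OF l])
          fix l' assume l': "l' < n" "l' \<noteq> l"
          show "X $$ (i,l') * A $$ (l',l) = 0"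
          proof (cases "A $$ (l',l) = 0")
            case False
            then have "R l' l" using A(2) l l' unfolding respx_def by auto
            then have "l' < l" "\<not> R i l'" using le[of l' l] l' nR tr by auto
            then show ?thesis using less.IH l' by auto
          qed simp
        qed
        finally show "X $$ (i,l) = 0" using dg[OF l] by simp
      qed
    qed
    then show ?thesis by blast
  qed
  show "R i k" using main k nz by blast
qed

definition RB :: "nat \<Rightarrow> nat \<Rightarrow> nat \<Rightarrow> bool" where
  "RB m i k \<longleftrightarrow> i div m = k div m \<and> i \<le> k"

lemma B_md_alt: "B_md m d = {A \<in> carrier_mat (m*d) (m*d). invertible_mat A \<and> respx (RB m) (m*d) A}"
  unfolding B_md_def respx_def RB_def by auto

lemma T_md_alt: "T_md m d = {A \<in> carrier_mat (m*d) (m*d). invertible_mat A \<and> respx (=) (m*d) A}"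
  unfolding T_md_def respx_def diagonal_mat_def by (auto, blast+)

lemma GL_simps: "carrier (GL_grp n) = {A \<in> carrier_mat n n. invertible_mat A}"
  "mult (GL_grp n) = (*)" "one (GL_grp n) = 1\<^sub>m n"
  by (auto simp: GL_grp_def)

lemma GL_group: "group (GL_grp n :: 'a::field mat monoid)"
proof (rule groupI)
  show "x \<otimes>\<^bsub>GL_grp n\<^esub> y \<in> carrier (GL_grp n)" if "x \<in> carrier (GL_grp n)" "y \<in> carrier (GL_grp n)" for x y :: "'a mat"
    using that invertible_mult[of x n y] by (auto simp: GL_grp_def)
  show "\<one>\<^bsub>GL_grp n\<^esub> \<in> carrier (GL_grp n :: 'a mat monoid)"
    using invertible_of_right_inv[of "1\<^sub>m n :: 'a mat" n "1\<^sub>m n"] by (auto simp: GL_grp_def)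
  show "x \<otimes>\<^bsub>GL_grp n\<^esub> y \<otimes>\<^bsub>GL_grp n\<^esub> z = x \<otimes>\<^bsub>GL_grp n\<^esub> (y \<otimes>\<^bsub>GL_grp n\<^esub> z)"
    if "x \<in> carrier (GL_grp n)" "y \<in> carrier (GL_grp n)" "z \<in> carrier (GL_grp n)" for x y z :: "'a mat"
    using that by (auto simp: GL_grp_def)
  show "\<one>\<^bsub>GL_grp n\<^esub> \<otimes>\<^bsub>GL_grp n\<^esub> x = x" if "x \<in> carrier (GL_grp n)" for x :: "'a mat"
    using that by (auto simp: GL_grp_def)
  show "\<exists>y\<in>carrier (GL_grp n). y \<otimes>\<^bsub>GL_grp n\<^esub> x = \<one>\<^bsub>GL_grp n\<^esub>" if "x \<in> carrier (GL_grp n)" for x :: "'a mat"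
  proof -
    have x: "x \<in> carrier_mat n n" "invertible_mat x" using that by (auto simp: GL_simps)
    obtain B where B: "B \<in> carrier_mat n n" "x * B = 1\<^sub>m n" "B * x = 1\<^sub>m n"
      using invertible_inv_ex[OF x] by auto
    then have "invertible_mat B" using that invertible_of_right_inv[of B n x] by (auto simp: GL_grp_def)
    then show ?thesis using B by (auto simp: GL_grp_def)
  qed
qed

lemma GL_inv:
  fixes A :: "'a::field mat"
  assumes "A \<in> carrier (GL_grp n)"
  shows "inv\<^bsub>GL_grp n\<^esub> A \<in> carrier_mat n n" "invertible_mat (inv\<^bsub>GL_grp n\<^esub> A)"
    "inv\<^bsub>GL_grp n\<^esub> A * A = 1\<^sub>m n" "A * inv\<^bsub>GL_grp n\<^esub> A = 1\<^sub>m n"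
proof -
  interpret group "GL_grp n :: 'a mat monoid" by (rule GL_group)
  show "inv\<^bsub>GL_grp n\<^esub> A \<in> carrier_mat n n" "invertible_mat (inv\<^bsub>GL_grp n\<^esub> A)"
    using inv_closed[OF assms] by (auto simp: GL_simps)
  show "inv\<^bsub>GL_grp n\<^esub> A * A = 1\<^sub>m n" "A * inv\<^bsub>GL_grp n\<^esub> A = 1\<^sub>m n"
    using l_inv[OF assms] r_inv[OF assms] by (auto simp: GL_simps)
qed

lemma one_respx: "(\<And>i. R i i) \<Longrightarrow> respx R n (1\<^sub>m n :: 'a::field mat)"
  unfolding respx_def by auto

lemma one_invertible: "invertible_mat (1\<^sub>m n :: 'a::field mat)"
  using invertible_of_right_inv[of "1\<^sub>m n :: 'a mat" n "1\<^sub>m n"] by auto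

lemma respx_subgroup:
  assumes tr: "\<And>i j k. R i j \<Longrightarrow> R j k \<Longrightarrow> R i k"
    and rf: "\<And>i. R i i" and le: "\<And>i k. R i k \<Longrightarrow> i \<le> k"
  shows "subgroup {A \<in> carrier_mat n n. invertible_mat A \<and> respx R n A} (GL_grp n :: 'a::field mat monoid)"
proof -
  interpret group "GL_grp n :: 'a mat monoid" by (rule GL_group)
  show ?thesis
  proof (rule subgroupI)
    show "{A \<in> carrier_mat n n. invertible_mat A \<and> respx R n A} \<subseteq> carrier (GL_grp n :: 'a mat monoid)"
      by (auto simp: GL_simps)
    show "{A \<in> carrier_mat n n. invertible_mat A \<and> respx R n A} \<noteq> {}"
      using one_respx[of R n] rf one_invertible[of n] by auto
  next
    fix a :: "'a mat" assume a: "a \<in> {A \<in> carrier_mat n n. invertible_mat A \<and> respx R n A}"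
    then have aG: "a \<in> carrier (GL_grp n)" by (auto simp: GL_simps)
    have dg: "a $$ (l,l) \<noteq> 0" if "l < n" for l
    proof (rule diag_nonzero[of a n])
      have aa: "\<forall>i<n. \<forall>k<n. a $$ (i,k) \<noteq> 0 \<longrightarrow> R i k" using a by (simp add: respx_def)
      show "a $$ (i, k) = 0" if "i < n" "k < n" "k < i" for i k
        using aa that le[of i k] by (meson leD)
    qed (use a that in auto)
    show "inv\<^bsub>GL_grp n\<^esub> a \<in> {A \<in> carrier_mat n n. invertible_mat A \<and> respx R n A}"
      using GL_inv[OF aG] respx_inv[where R=R and A=a and n=n and X="inv\<^bsub>GL_grp n\<^esub> a", OF tr rf le] a dg by auto
  next
    fix a b :: "'a mat" assume "a \<in> {A \<in> carrier_mat n n. invertible_mat A \<and> respx R n A}"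
      "b \<in> {A \<in> carrier_mat n n. invertible_mat A \<and> respx R n A}"
    then show "a \<otimes>\<^bsub>GL_grp n\<^esub> b \<in> {A \<in> carrier_mat n n. invertible_mat A \<and> respx R n A}"
      using invertible_mult[of a n b] respx_mult[where R=R and A=a and n=n and B=b, OF tr] by (auto simp: GL_simps)
  qed
qed

lemma B_subgroup: "subgroup (B_md m d) (GL_grp (m*d) :: 'a::field mat monoid)"
  unfolding B_md_alt by (rule respx_subgroup) (auto simp: RB_def)

lemma T_subgroup: "subgroup (T_md m d) (GL_grp (m*d) :: 'a::field mat monoid)"
  unfolding T_md_alt by (rule respx_subgroup) auto

definition monom :: "nat \<Rightarrow> (nat \<Rightarrow> nat) \<Rightarrow> 'a::field mat \<Rightarrow> bool" where
  "monom n \<pi> A \<longleftrightarrow> A \<in> carrier_mat n n \<and> (\<forall>i<n. \<forall>k<n. (A $$ (i,k) \<noteq> 0) = (i = \<pi> k))"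

lemma monom_mult:
  fixes A B :: "'a::field mat"
  assumes p: "\<pi> permutes {..<n}" and r: "\<rho> permutes {..<n}"
    and A: "monom n \<pi> A" and B: "monom n \<rho> B"
  shows "monom n (\<pi> \<circ> \<rho>) (A * B)"
proof -
  have Ac: "A \<in> carrier_mat n n" and Bc: "B \<in> carrier_mat n n" using A B by (auto simp: monom_def)
  have e: "(A * B) $$ (i,k) = A $$ (i, \<rho> k) * B $$ (\<rho> k, k)" if ik: "i < n" "k < n" for i k
  proof -
    have rk: "\<rho> k < n" using r ik permutes_in_image by fastforce
    show ?thesis unfolding mult_entry[OF Ac Bc ik]
      using B ik rk by (intro sum_single) (auto simp: monom_def)
  qed
  show ?thesis unfolding monom_def
  proof (intro conjI allI impI)
    show "A * B \<in> carrier_mat n n" using Ac Bc by auto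
    fix i k assume ik: "i < n" "k < n"
    have rk: "\<rho> k < n" using r ik permutes_in_image by fastforce
    show "((A * B) $$ (i,k) \<noteq> 0) = (i = (\<pi> \<circ> \<rho>) k)"
      unfolding e[OF ik] using A B ik rk by (auto simp: monom_def)
  qed
qed

lemma monom_invertible:
  fixes A :: "'a::field mat"
  assumes p: "\<pi> permutes {..<n}" and A: "monom n \<pi> A"
  shows "invertible_mat A"
proof -
  have Ac: "A \<in> carrier_mat n n" using A by (auto simp: monom_def)
  define Y where "Y = mat n n (\<lambda>(i,k). if k = \<pi> i then 1 / A $$ (k,i) else (0::'a))"
  have Yc: "Y \<in> carrier_mat n n" by (simp add: Y_def)
  have "A * Y = 1\<^sub>m n"
  proof (rule eq_matI)
    fix i k assume "i < dim_row (1\<^sub>m n :: 'a mat)" "k < dim_col (1\<^sub>m n :: 'a mat)"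
    then have ik: "i < n" "k < n" by auto
    have ik': "iv \<pi> k < n" using p ik permutes_inv permutes_in_image by fastforce
    have "(A * Y) $$ (i,k) = A $$ (i, iv \<pi> k) * Y $$ (iv \<pi> k, k)"
      unfolding mult_entry[OF Ac Yc ik]
      using ik ik' by (intro sum_single) (auto simp: Y_def permutes_inverses[OF p])
    also have "\<dots> = (if i = k then 1 else 0)"
    proof -
      have "(A $$ (i, iv \<pi> k) \<noteq> 0) = (i = \<pi> (iv \<pi> k))" using A ik ik' unfolding monom_def by blast
      then have e: "(A $$ (i, iv \<pi> k) \<noteq> 0) = (i = k)" by (simp add: permutes_inverses[OF p])
      show ?thesis using e ik ik' by (auto simp: Y_def permutes_inverses[OF p])
    qed
    finally show "(A * Y) $$ (i,k) = 1\<^sub>m n $$ (i,k)" using ik by simp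
  qed (use Ac Yc in auto)
  then show ?thesis using invertible_of_right_inv[OF Ac Yc] by auto
qed

lemma monom_perm: "\<pi> permutes {..<n} \<Longrightarrow> monom n \<pi> (perm_matrix n \<pi> :: 'a::field mat)"
  unfolding monom_def by auto

lemma monom_unique:
  assumes p: "\<pi> permutes {..<n}" and r: "\<rho> permutes {..<n}"
    and A: "monom n \<pi> A" and B: "monom n \<rho> A"
  shows "\<pi> = \<rho>"
proof
  fix k show "\<pi> k = \<rho> k"
  proof (cases "k < n")
    case True
    then have "\<pi> k < n" using p permutes_in_image by fastforce
    then show ?thesis using A B True unfolding monom_def by metis
  next
    case False
    then show ?thesis using p r by (simp add: permutes_def)
  qed
qed

definition uperm :: "nat \<Rightarrow> 'a::field mat \<Rightarrow> nat \<Rightarrow> nat" where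
  "uperm n A = (\<lambda>k. if k < n then (THE i. i < n \<and> A $$ (i,k) \<noteq> 0) else k)"

lemma uperm_monom:
  assumes p: "\<pi> permutes {..<n}" and A: "monom n \<pi> A"
  shows "uperm n A = \<pi>"
proof
  fix k show "uperm n A k = \<pi> k"
  proof (cases "k < n")
    case True
    then have pk: "\<pi> k < n" using p permutes_in_image by fastforce
    have "(THE i. i < n \<and> A $$ (i,k) \<noteq> 0) = \<pi> k"
      using A True pk unfolding monom_def by (intro the_equality) auto
    then show ?thesis using True by (simp add: uperm_def)
  next
    case False
    then show ?thesis using p by (simp add: uperm_def permutes_def)
  qed
qed

lemma T_monom_iff: "((A :: 'a::field mat) \<in> T_md m d) = monom (m*d) id A"
proof
  assume A: "A \<in> T_md m d"
  then have Ac: "A \<in> carrier_mat (m*d) (m*d)" "invertible_mat A" "respx (=) (m*d) A"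
    by (auto simp: T_md_alt)
  have "A $$ (l,l) \<noteq> 0" if "l < m*d" for l
  proof (rule diag_nonzero[OF Ac(1,2)])
    show "A $$ (i,k) = 0" if "i < m*d" "k < m*d" "k < i" for i k using Ac(3) that unfolding respx_def
      by (metis less_irrefl)
  qed (rule that)
  then show "monom (m*d) id A" using Ac unfolding monom_def respx_def by auto
next
  assume A: "monom (m*d) id A"
  then show "A \<in> T_md m d" using monom_invertible[OF permutes_id A]
    unfolding T_md_alt monom_def respx_def by auto
qed

section \<open>Permutation combinatorics\<close>

lemma blk_lt: "j < d \<Longrightarrow> a < m \<Longrightarrow> j*m+a < m*(d::nat)"
proof -
  assume "j < d" "a < m"
  have "j*m + a < j*m + m" using \<open>a < m\<close> by simp
  also have "\<dots> = Suc j * m" by simp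
  also have "\<dots> \<le> d*m" using mult_le_mono1[of "Suc j" d m] \<open>j < d\<close> by simp
  finally show ?thesis by (simp add: mult.commute)
qed

lemma div_lt: "0 < (m::nat) \<Longrightarrow> x < m*d \<Longrightarrow> x div m < d"
  by (simp add: less_mult_imp_div_less mult.commute)

lemma block_eq: "0 < (m::nat) \<Longrightarrow> c < d \<Longrightarrow> {y. y < m*d \<and> y div m = c} = (\<lambda>a. c*m + a) ` {..<m}"
proof (intro Set.set_eqI iffI)
  fix y assume m: "0 < m" "c < d" and "y \<in> {y. y < m*d \<and> y div m = c}"
  then have "y div m = c" by auto
  then have "y = c*m + y mod m" using m by (metis div_mult_mod_eq add.commute mult.commute)
  then show "y \<in> (\<lambda>a. c*m + a) ` {..<m}" using m by (intro image_eqI[of _ _ "y mod m"]) auto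
next
  fix y assume m: "0 < m" "c < d" and "y \<in> (\<lambda>a. c*m + a) ` {..<m}"
  then obtain a where "a < m" "y = c*m + a" by auto
  then show "y \<in> {y. y < m*d \<and> y div m = c}" using m blk_lt by auto
qed

lemma block_card: "0 < (m::nat) \<Longrightarrow> c < d \<Longrightarrow> card {y. y < m*d \<and> y div m = c} = m"
  by (subst block_eq) (auto simp: card_image inj_on_def)

definition WRp :: "nat \<Rightarrow> nat \<Rightarrow> (nat \<Rightarrow> nat) \<Rightarrow> bool" where
  "WRp m d \<pi> \<longleftrightarrow> \<pi> permutes {..<m*d} \<and> (\<forall>x<m*d. \<forall>y<m*d. x div m = y div m \<longrightarrow> \<pi> x div m = \<pi> y div m)"

lemma block_onto:
  assumes m: "0 < m" and W: "WRp m d \<pi>" and x: "x < m*d"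
  shows "\<pi> ` {y. y < m*d \<and> y div m = x div m} = {y. y < m*d \<and> y div m = \<pi> x div m}"
proof -
  have p: "\<pi> permutes {..<m*d}" using W by (simp add: WRp_def)
  have px: "\<pi> x < m*d" using x permutes_in_image[OF p] by simp
  have sub: "\<pi> ` {y. y < m*d \<and> y div m = x div m} \<subseteq> {y. y < m*d \<and> y div m = \<pi> x div m}"
  proof
    fix z assume "z \<in> \<pi> ` {y. y < m*d \<and> y div m = x div m}"
    then obtain y where y: "y < m*d" "y div m = x div m" "z = \<pi> y" by auto
    have "\<pi> y < m*d" using y(1) permutes_in_image[OF p] by simp
    moreover have "\<pi> y div m = \<pi> x div m" using W y x unfolding WRp_def by blast
    ultimately show "z \<in> {y. y < m*d \<and> y div m = \<pi> x div m}" using y by simp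
  qed
  have "card (\<pi> ` {y. y < m*d \<and> y div m = x div m}) = card {y. y < m*d \<and> y div m = x div m}"
    using permutes_inj[OF p] by (intro card_image) (simp add: inj_on_def inj_def)
  also have "\<dots> = m" using block_card[OF m div_lt[OF m x]] .
  also have "\<dots> = card {y. y < m*d \<and> y div m = \<pi> x div m}" using block_card[OF m div_lt[OF m px]] by simp
  finally show ?thesis using sub by (intro card_subset_eq) auto
qed

lemma WRp_comp: "WRp m d \<pi> \<Longrightarrow> WRp m d \<rho> \<Longrightarrow> WRp m d (\<pi> \<circ> \<rho>)"
  unfolding WRp_def
proof (intro conjI allI impI)
  assume a: "\<pi> permutes {..<m*d} \<and> (\<forall>x<m*d. \<forall>y<m*d. x div m = y div m \<longrightarrow> \<pi> x div m = \<pi> y div m)"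
    "\<rho> permutes {..<m*d} \<and> (\<forall>x<m*d. \<forall>y<m*d. x div m = y div m \<longrightarrow> \<rho> x div m = \<rho> y div m)"
  then show "\<pi> \<circ> \<rho> permutes {..<m*d}" using permutes_compose[of \<rho> "{..<m*d}" \<pi>] by simp
  fix x y assume xy: "x < m*d" "y < m*d" "x div m = y div m"
  have r: "\<rho> permutes {..<m*d}" using a by blast
  have "\<rho> x < m*d" "\<rho> y < m*d" using xy permutes_in_image[OF r] by simp_all
  moreover have "\<rho> x div m = \<rho> y div m" using a xy by blast
  ultimately have "\<pi> (\<rho> x) div m = \<pi> (\<rho> y) div m" using a by blast
  then show "(\<pi> \<circ> \<rho>) x div m = (\<pi> \<circ> \<rho>) y div m" by simp
qed

lemma WRp_id: "WRp m d id"
  unfolding WRp_def by auto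

lemma WRp_inv:
  assumes m: "0 < m" and W: "WRp m d \<pi>"
  shows "WRp m d (iv \<pi>)"
proof -
  have p: "\<pi> permutes {..<m*d}" using W by (simp add: WRp_def)
  have "iv \<pi> x div m = iv \<pi> y div m" if xy: "x < m*d" "y < m*d" "x div m = y div m" for x y
  proof -
    let ?u = "iv \<pi> x" and ?v = "iv \<pi> y"
    have u: "?u < m*d" and v: "?v < m*d" using xy permutes_in_image[OF permutes_inv[OF p]] by simp_all
    have "\<pi> ?u = x" "\<pi> ?v = y" by (simp_all add: permutes_inverses[OF p])
    then have "y \<in> \<pi> ` {z. z < m*d \<and> z div m = ?u div m}" using block_onto[OF m W u] xy by auto
    then obtain z where z: "z < m*d" "z div m = ?u div m" "y = \<pi> z" by auto
    then have "?v = z" by (simp add: permutes_inverses[OF p])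
    then show ?thesis using z by simp
  qed
  then show ?thesis using permutes_inv[OF p] unfolding WRp_def by blast
qed

lemma WRp_sigma:
  assumes m: "0 < m" and W: "WRp m d \<pi>"
  shows "\<exists>\<sigma>. \<sigma> permutes {..<d} \<and> (\<forall>x<m*d. \<pi> x div m = \<sigma> (x div m))"
proof -
  have p: "\<pi> permutes {..<m*d}" using W by (simp add: WRp_def)
  define \<sigma> where "\<sigma> = (\<lambda>j. if j < d then \<pi> (j*m) div m else j)"
  have jm: "j*m < m*d" if "j < d" for j using blk_lt[OF that m] by simp
  have pin: "\<pi> z < m*d" if "z < m*d" for z using that permutes_in_image[OF p] by simp
  have "\<sigma> permutes {..<d}"
  proof (rule inj_imp_permutes)
    show "inj_on \<sigma> {..<d}"
    proof (rule inj_onI)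
      fix j j' assume j: "j \<in> {..<d}" "j' \<in> {..<d}" and e: "\<sigma> j = \<sigma> j'"
      then have e': "\<pi> (j'*m) div m = \<pi> (j*m) div m" by (simp add: \<sigma>_def)
      have "\<pi> (j'*m) \<in> \<pi> ` {y. y < m*d \<and> y div m = (j*m) div m}"
        using block_onto[OF m W jm[of j]] j e' pin[OF jm[of j']] by auto
      then obtain z where z: "z < m*d" "z div m = (j*m) div m" "\<pi> (j'*m) = \<pi> z" by auto
      then have "j'*m = z" using permutes_inj[OF p] by (auto dest: injD)
      then have "(j'*m) div m = j" using z m by simp
      then show "j = j'" using m by simp
    qed
    show "\<sigma> x \<in> {..<d}" if "x \<in> {..<d}" for x using that div_lt[OF m pin[OF jm]] by (auto simp: \<sigma>_def)
    show "\<sigma> x = x" if "x \<notin> {..<d}" for x using that by (simp add: \<sigma>_def)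
  qed simp
  moreover have "\<pi> x div m = \<sigma> (x div m)" if x: "x < m*d" for x
  proof -
    have "x div m < d" using div_lt[OF m x] .
    moreover have "(x div m * m) div m = x div m" using m by simp
    moreover have "x div m * m < m*d" using jm \<open>x div m < d\<close> by simp
    moreover have "\<pi> x div m = \<pi> (x div m * m) div m"
      using W x \<open>x div m * m < m*d\<close> \<open>(x div m * m) div m = x div m\<close> unfolding WRp_def by metis
    ultimately show ?thesis unfolding \<sigma>_def by simp
  qed
  ultimately show ?thesis by blast
qed

lemma divmod_eq: "x div (m::nat) = y div m \<Longrightarrow> x mod m = y mod m \<Longrightarrow> x = y"
  by (metis div_mult_mod_eq)

lemma wreath_char:
  assumes m: "0 < m"
  shows "wreath_perms m d = {\<pi>. WRp m d \<pi>}"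
proof (intro Set.set_eqI iffI)
  fix \<pi> assume "\<pi> \<in> wreath_perms m d"
  then obtain \<sigma> w where p: "\<pi> permutes {..<m*d}" and s: "\<sigma> permutes {..<d}"
    and w: "\<forall>i<d. w i permutes {..<m}" and f: "\<forall>j<d. \<forall>a<m. \<pi> (j*m+a) = \<sigma> j * m + w (\<sigma> j) a"
    unfolding wreath_perms_def by blast
  have key: "\<pi> x div m = \<sigma> (x div m)" if x: "x < m*d" for x
  proof -
    have j: "x div m < d" using div_lt[OF m x] .
    have a: "x mod m < m" using m by simp
    have sj: "\<sigma> (x div m) < d" using permutes_in_image[OF s] j by simp
    have wa: "w (\<sigma> (x div m)) (x mod m) < m" using permutes_in_image[of "w (\<sigma> (x div m))" "{..<m}"] w sj a by auto
    have "\<pi> x = \<pi> ((x div m)*m + x mod m)" by simp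
    also have "\<dots> = \<sigma> (x div m) * m + w (\<sigma> (x div m)) (x mod m)" using f j a by blast
    finally show ?thesis using wa by simp
  qed
  show "\<pi> \<in> {\<pi>. WRp m d \<pi>}" using p key unfolding WRp_def by simp
next
  fix \<pi> assume "\<pi> \<in> {\<pi>. WRp m d \<pi>}"
  then have W: "WRp m d \<pi>" by simp
  then have p: "\<pi> permutes {..<m*d}" by (simp add: WRp_def)
  obtain \<sigma> where s: "\<sigma> permutes {..<d}" and key: "\<forall>x<m*d. \<pi> x div m = \<sigma> (x div m)"
    using WRp_sigma[OF m W] by blast
  define w where "w = (\<lambda>i a. if a < m then \<pi> (iv \<sigma> i * m + a) mod m else a)"
  have kj: "\<pi> (j*m + a) div m = \<sigma> j" if "j < d" "a < m" for j a
    using key blk_lt[OF that] that m by simp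
  have "w i permutes {..<m}" if i: "i < d" for i
  proof (rule inj_imp_permutes)
    have j: "iv \<sigma> i < d" using permutes_in_image[OF permutes_inv[OF s]] i by simp
    show "inj_on (w i) {..<m}"
    proof (rule inj_onI)
      fix a b assume ab: "a \<in> {..<m}" "b \<in> {..<m}" "w i a = w i b"
      then have "\<pi> (iv \<sigma> i * m + a) mod m = \<pi> (iv \<sigma> i * m + b) mod m" by (simp add: w_def)
      moreover have "\<pi> (iv \<sigma> i * m + a) div m = \<pi> (iv \<sigma> i * m + b) div m" using kj j ab by simp
      ultimately have "\<pi> (iv \<sigma> i * m + a) = \<pi> (iv \<sigma> i * m + b)" using divmod_eq by blast
      then have "iv \<sigma> i * m + a = iv \<sigma> i * m + b" using injD[OF permutes_inj[OF p]] by blast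
      then show "a = b" by simp
    qed
    show "w i x \<in> {..<m}" if "x \<in> {..<m}" for x using that m by (simp add: w_def)
    show "w i x = x" if "x \<notin> {..<m}" for x using that by (simp add: w_def)
  qed simp
  moreover have "\<pi> (j*m+a) = \<sigma> j * m + w (\<sigma> j) a" if "j < d" "a < m" for j a
  proof -
    have "w (\<sigma> j) a = \<pi> (j*m+a) mod m" using that by (simp add: w_def permutes_inverses[OF s])
    then show ?thesis using kj[OF that] by (metis div_mult_mod_eq)
  qed
  ultimately show "\<pi> \<in> wreath_perms m d" unfolding wreath_perms_def using p s by blast
qed

lemma W0_char:
  assumes m: "0 < m"
  shows "W0_perms m d = {\<pi>. \<pi> permutes {..<m*d} \<and> (\<forall>x<m*d. \<pi> x div m = x div m)}"
proof (intro Set.set_eqI iffI)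
  fix \<pi> assume "\<pi> \<in> W0_perms m d"
  then obtain w where p: "\<pi> permutes {..<m*d}"
    and w: "\<forall>i<d. w i permutes {..<m}" and f: "\<forall>j<d. \<forall>a<m. \<pi> (j*m+a) = j * m + w j a"
    unfolding W0_perms_def by blast
  have key: "\<pi> x div m = x div m" if x: "x < m*d" for x
  proof -
    have j: "x div m < d" using div_lt[OF m x] .
    have a: "x mod m < m" using m by simp
    have wa: "w (x div m) (x mod m) < m" using permutes_in_image[of "w (x div m)" "{..<m}"] w j a by auto
    have "\<pi> x = \<pi> ((x div m)*m + x mod m)" by simp
    also have "\<dots> = (x div m) * m + w (x div m) (x mod m)" using f j a by blast
    finally show ?thesis using wa by simp
  qed
  show "\<pi> \<in> {\<pi>. \<pi> permutes {..<m*d} \<and> (\<forall>x<m*d. \<pi> x div m = x div m)}" using p key by simp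
next
  fix \<pi> assume "\<pi> \<in> {\<pi>. \<pi> permutes {..<m*d} \<and> (\<forall>x<m*d. \<pi> x div m = x div m)}"
  then have p: "\<pi> permutes {..<m*d}" and key: "\<forall>x<m*d. \<pi> x div m = x div m" by auto
  define w where "w = (\<lambda>i a. if a < m then \<pi> (i * m + a) mod m else a)"
  have kj: "\<pi> (j*m + a) div m = j" if "j < d" "a < m" for j a
    using key blk_lt[OF that] that m by simp
  have "w i permutes {..<m}" if i: "i < d" for i
  proof (rule inj_imp_permutes)
    show "inj_on (w i) {..<m}"
    proof (rule inj_onI)
      fix a b assume ab: "a \<in> {..<m}" "b \<in> {..<m}" "w i a = w i b"
      then have "\<pi> (i * m + a) mod m = \<pi> (i * m + b) mod m" by (simp add: w_def)
      moreover have "\<pi> (i * m + a) div m = \<pi> (i * m + b) div m" using kj i ab by simp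
      ultimately have "\<pi> (i * m + a) = \<pi> (i * m + b)" using divmod_eq by blast
      then have "i * m + a = i * m + b" using injD[OF permutes_inj[OF p]] by blast
      then show "a = b" by simp
    qed
    show "w i x \<in> {..<m}" if "x \<in> {..<m}" for x using that m by (simp add: w_def)
    show "w i x = x" if "x \<notin> {..<m}" for x using that by (simp add: w_def)
  qed simp
  moreover have "\<pi> (j*m+a) = j * m + w j a" if "j < d" "a < m" for j a
  proof -
    have "w j a = \<pi> (j*m+a) mod m" using that by (simp add: w_def)
    then show ?thesis using kj[OF that] by (metis div_mult_mod_eq)
  qed
  ultimately show "\<pi> \<in> W0_perms m d" unfolding W0_perms_def using p by blast
qed

lemma Omega_char:
  assumes m: "0 < m"
  shows "Omega_perms m d = {\<pi>. WRp m d \<pi> \<and> (\<forall>x<m*d. \<pi> x mod m = x mod m)}"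
proof (intro Set.set_eqI iffI)
  fix \<pi> assume "\<pi> \<in> Omega_perms m d"
  then obtain \<sigma> where p: "\<pi> permutes {..<m*d}" and s: "\<sigma> permutes {..<d}"
    and f: "\<forall>j<d. \<forall>a<m. \<pi> (j*m+a) = \<sigma> j * m + a"
    unfolding Omega_perms_def by blast
  have key: "\<pi> x div m = \<sigma> (x div m) \<and> \<pi> x mod m = x mod m" if x: "x < m*d" for x
  proof -
    have j: "x div m < d" using div_lt[OF m x] .
    have a: "x mod m < m" using m by simp
    have "\<pi> x = \<pi> ((x div m)*m + x mod m)" by simp
    also have "\<dots> = \<sigma> (x div m) * m + x mod m" using f j a by blast
    finally show ?thesis using a by simp
  qed
  show "\<pi> \<in> {\<pi>. WRp m d \<pi> \<and> (\<forall>x<m*d. \<pi> x mod m = x mod m)}" using p key unfolding WRp_def by simp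
next
  fix \<pi> assume "\<pi> \<in> {\<pi>. WRp m d \<pi> \<and> (\<forall>x<m*d. \<pi> x mod m = x mod m)}"
  then have W: "WRp m d \<pi>" and md: "\<forall>x<m*d. \<pi> x mod m = x mod m" by auto
  then have p: "\<pi> permutes {..<m*d}" by (simp add: WRp_def)
  obtain \<sigma> where s: "\<sigma> permutes {..<d}" and key: "\<forall>x<m*d. \<pi> x div m = \<sigma> (x div m)"
    using WRp_sigma[OF m W] by blast
  have "\<pi> (j*m+a) = \<sigma> j * m + a" if "j < d" "a < m" for j a
  proof -
    have "\<pi> (j*m+a) div m = \<sigma> j" using key blk_lt[OF that] that m by simp
    moreover have "\<pi> (j*m+a) mod m = a" using md blk_lt[OF that] that m by simp
    ultimately show ?thesis by (metis div_mult_mod_eq)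
  qed
  then show "\<pi> \<in> Omega_perms m d" unfolding Omega_perms_def using p s by blast
qed

lemma W_simps: "carrier (wreath_grp m d) = wreath_perms m d" "mult (wreath_grp m d) = (\<circ>)"
  "one (wreath_grp m d) = id"
  by (auto simp: wreath_grp_def)

lemma W_group:
  assumes m: "0 < m"
  shows "group (wreath_grp m d)"
proof (rule groupI)
  note wc = wreath_char[OF m]
  show "x \<otimes>\<^bsub>wreath_grp m d\<^esub> y \<in> carrier (wreath_grp m d)"
    if "x \<in> carrier (wreath_grp m d)" "y \<in> carrier (wreath_grp m d)" for x y
    using that WRp_comp by (auto simp: W_simps wc)
  show "\<one>\<^bsub>wreath_grp m d\<^esub> \<in> carrier (wreath_grp m d)" using WRp_id by (auto simp: W_simps wc)
  show "x \<otimes>\<^bsub>wreath_grp m d\<^esub> y \<otimes>\<^bsub>wreath_grp m d\<^esub> z = x \<otimes>\<^bsub>wreath_grp m d\<^esub> (y \<otimes>\<^bsub>wreath_grp m d\<^esub> z)" for x y z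
    by (simp add: W_simps o_assoc)
  show "\<one>\<^bsub>wreath_grp m d\<^esub> \<otimes>\<^bsub>wreath_grp m d\<^esub> x = x" for x by (simp add: W_simps)
  show "\<exists>y\<in>carrier (wreath_grp m d). y \<otimes>\<^bsub>wreath_grp m d\<^esub> x = \<one>\<^bsub>wreath_grp m d\<^esub>"
    if "x \<in> carrier (wreath_grp m d)" for x
  proof -
    have W: "WRp m d x" using that by (simp add: W_simps wc)
    then have "x permutes {..<m*d}" by (simp add: WRp_def)
    then show ?thesis using WRp_inv[OF m W] permutes_inv_o(2)[of x] by (auto simp: W_simps wc)
  qed
qed

lemma W_inv:
  assumes m: "0 < m" and x: "x \<in> carrier (wreath_grp m d)"
  shows "inv\<^bsub>wreath_grp m d\<^esub> x = iv x"
proof -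
  interpret group "wreath_grp m d" by (rule W_group[OF m])
  have W: "WRp m d x" using x by (simp add: W_simps wreath_char[OF m])
  then have "x permutes {..<m*d}" by (simp add: WRp_def)
  then show ?thesis using WRp_inv[OF m W] x permutes_inv_o(2)[of x]
    by (intro inv_equality) (auto simp: W_simps wreath_char[OF m])
qed

lemma W0_sub: "0 < m \<Longrightarrow> W0_perms m d \<subseteq> wreath_perms m d"
  by (auto simp: W0_char wreath_char WRp_def)

lemma W0_subgroup:
  assumes m: "0 < m"
  shows "subgroup (W0_perms m d) (wreath_grp m d)"
proof -
  interpret group "wreath_grp m d" by (rule W_group[OF m])
  show ?thesis
  proof (rule subgroupI)
    show "W0_perms m d \<subseteq> carrier (wreath_grp m d)" using W0_sub[OF m] by (simp add: W_simps)
    show "W0_perms m d \<noteq> {}" using m by (auto simp: W0_char intro!: exI[of _ id])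
  next
    fix a assume a: "a \<in> W0_perms m d"
    then have p: "a permutes {..<m*d}" and k: "\<forall>x<m*d. a x div m = x div m" by (auto simp: W0_char[OF m])
    have "iv a x div m = x div m" if "x < m*d" for x
    proof -
      have "iv a x < m*d" using permutes_in_image[OF permutes_inv[OF p]] that by simp
      then have "a (iv a x) div m = iv a x div m" using k by blast
      then show ?thesis by (simp add: permutes_inverses[OF p])
    qed
    moreover have "inv\<^bsub>wreath_grp m d\<^esub> a = iv a" using W_inv[OF m] a W0_sub[OF m] by (auto simp: W_simps)
    ultimately show "inv\<^bsub>wreath_grp m d\<^esub> a \<in> W0_perms m d"
      using permutes_inv[OF p] by (auto simp: W0_char[OF m])
  next
    fix a b assume "a \<in> W0_perms m d" "b \<in> W0_perms m d"
    then have p: "a permutes {..<m*d}" "b permutes {..<m*d}" and k: "\<forall>x<m*d. a x div m = x div m" "\<forall>x<m*d. b x div m = x div m"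
      by (auto simp: W0_char[OF m])
    have "(a \<circ> b) x div m = x div m" if "x < m*d" for x
    proof -
      have "b x < m*d" using permutes_in_image[OF p(2)] that by simp
      then show ?thesis using k that by simp
    qed
    then show "a \<otimes>\<^bsub>wreath_grp m d\<^esub> b \<in> W0_perms m d"
      using permutes_compose[OF p(2) p(1)] by (auto simp: W0_char[OF m] W_simps)
  qed
qed

lemma W0_normal:
  assumes m: "0 < m"
  shows "W0_perms m d \<lhd> wreath_grp m d"
proof -
  interpret group "wreath_grp m d" by (rule W_group[OF m])
  show ?thesis
  proof (subst normal_inv_iff, intro conjI ballI)
    show "subgroup (W0_perms m d) (wreath_grp m d)" by (rule W0_subgroup[OF m])
    fix x h assume x: "x \<in> carrier (wreath_grp m d)" and h: "h \<in> W0_perms m d"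
    have W: "WRp m d x" using x by (simp add: W_simps wreath_char[OF m])
    then have px: "x permutes {..<m*d}" by (simp add: WRp_def)
    have ph: "h permutes {..<m*d}" and kh: "\<forall>y<m*d. h y div m = y div m" using h by (auto simp: W0_char[OF m])
    have "(x \<circ> h \<circ> iv x) y div m = y div m" if y: "y < m*d" for y
    proof -
      have z: "iv x y < m*d" using permutes_in_image[OF permutes_inv[OF px]] y by simp
      have hz: "h (iv x y) < m*d" using permutes_in_image[OF ph] z by simp
      have "h (iv x y) div m = iv x y div m" using kh z by blast
      then have "x (h (iv x y)) div m = x (iv x y) div m" using W z hz unfolding WRp_def by blast
      then show ?thesis by (simp add: permutes_inverses[OF px])
    qed
    moreover have "x \<circ> h \<circ> iv x permutes {..<m*d}"
      using permutes_compose[OF permutes_compose[OF permutes_inv[OF px] ph] px] by (simp add: o_assoc)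
    ultimately show "x \<otimes>\<^bsub>wreath_grp m d\<^esub> h \<otimes>\<^bsub>wreath_grp m d\<^esub> inv\<^bsub>wreath_grp m d\<^esub> x \<in> W0_perms m d"
      using W_inv[OF m x] by (simp add: W_simps W0_char[OF m])
  qed
qed

lemma Omega_subgroup:
  assumes m: "0 < m"
  shows "subgroup (Omega_perms m d) (wreath_grp m d)"
proof -
  interpret group "wreath_grp m d" by (rule W_group[OF m])
  show ?thesis
  proof (rule subgroupI)
    show "Omega_perms m d \<subseteq> carrier (wreath_grp m d)" by (auto simp: Omega_char[OF m] W_simps wreath_char[OF m])
    show "Omega_perms m d \<noteq> {}" using WRp_id by (auto simp: Omega_char[OF m] intro!: exI[of _ id])
  next
    fix a assume a: "a \<in> Omega_perms m d"
    then have W: "WRp m d a" and k: "\<forall>x<m*d. a x mod m = x mod m" by (auto simp: Omega_char[OF m])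
    then have p: "a permutes {..<m*d}" by (simp add: WRp_def)
    have "iv a x mod m = x mod m" if "x < m*d" for x
    proof -
      have "iv a x < m*d" using permutes_in_image[OF permutes_inv[OF p]] that by simp
      then have "a (iv a x) mod m = iv a x mod m" using k by blast
      then show ?thesis by (simp add: permutes_inverses[OF p])
    qed
    moreover have "a \<in> carrier (wreath_grp m d)" using W by (simp add: W_simps wreath_char[OF m])
    ultimately show "inv\<^bsub>wreath_grp m d\<^esub> a \<in> Omega_perms m d"
      using W_inv[OF m] WRp_inv[OF m W] by (auto simp: Omega_char[OF m])
  next
    fix a b assume "a \<in> Omega_perms m d" "b \<in> Omega_perms m d"
    then have W: "WRp m d a" "WRp m d b" and k: "\<forall>x<m*d. a x mod m = x mod m" "\<forall>x<m*d. b x mod m = x mod m"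
      by (auto simp: Omega_char[OF m])
    have "(a \<circ> b) x mod m = x mod m" if "x < m*d" for x
    proof -
      have "b x < m*d" using permutes_in_image[of b "{..<m*d}"] W(2) that by (simp add: WRp_def)
      then show ?thesis using k that by simp
    qed
    then show "a \<otimes>\<^bsub>wreath_grp m d\<^esub> b \<in> Omega_perms m d"
      using WRp_comp[OF W] by (auto simp: Omega_char[OF m] W_simps)
  qed
qed

lemma W0_Omega_int:
  assumes m: "0 < m"
  shows "W0_perms m d \<inter> Omega_perms m d = {id}"
proof (intro Set.set_eqI iffI)
  fix \<pi> :: "nat \<Rightarrow> nat" assume "\<pi> \<in> W0_perms m d \<inter> Omega_perms m d"
  then have p: "\<pi> permutes {..<m*d}" and k: "\<forall>x<m*d. \<pi> x div m = x div m" "\<forall>x<m*d. \<pi> x mod m = x mod m"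
    by (auto simp: W0_char[OF m] Omega_char[OF m])
  have "\<pi> x = x" for x
  proof (cases "x < m*d")
    case True then show ?thesis using k divmod_eq by blast
  next
    case False then show ?thesis using p by (simp add: permutes_def)
  qed
  then show "\<pi> \<in> {id}" by auto
next
  fix \<pi> :: "nat \<Rightarrow> nat" assume "\<pi> \<in> {id}"
  then show "\<pi> \<in> W0_perms m d \<inter> Omega_perms m d" using WRp_id by (auto simp: W0_char[OF m] Omega_char[OF m])
qed

lemma W_decomp:
  assumes m: "0 < m"
  shows "set_mult (wreath_grp m d) (W0_perms m d) (Omega_perms m d) = carrier (wreath_grp m d)"
proof (intro Set.set_eqI iffI)
  fix \<pi> assume "\<pi> \<in> set_mult (wreath_grp m d) (W0_perms m d) (Omega_perms m d)"
  then obtain h t where h: "h \<in> W0_perms m d" and t: "t \<in> Omega_perms m d" and e: "\<pi> = h \<circ> t"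
    unfolding set_mult_def by (auto simp: W_simps)
  have "WRp m d h" "WRp m d t" using h t W0_sub[OF m] by (auto simp: Omega_char[OF m] wreath_char[OF m])
  then show "\<pi> \<in> carrier (wreath_grp m d)" using e WRp_comp by (auto simp: W_simps wreath_char[OF m])
next
  fix \<pi> assume "\<pi> \<in> carrier (wreath_grp m d)"
  then have W: "WRp m d \<pi>" by (simp add: W_simps wreath_char[OF m])
  then have p: "\<pi> permutes {..<m*d}" by (simp add: WRp_def)
  obtain \<sigma> where s: "\<sigma> permutes {..<d}" and key: "\<forall>x<m*d. \<pi> x div m = \<sigma> (x div m)"
    using WRp_sigma[OF m W] by blast
  define t where "t = (\<lambda>x. if x < m*d then \<sigma> (x div m) * m + x mod m else x)"
  have sl: "\<sigma> (x div m) < d" if "x < m*d" for x using permutes_in_image[OF s] div_lt[OF m that] by simp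
  have tl: "t x < m*d" if "x < m*d" for x using blk_lt[OF sl[OF that]] m that by (simp add: t_def)
  have tdiv: "t x div m = \<sigma> (x div m)" if "x < m*d" for x using that m by (simp add: t_def)
  have tmod: "t x mod m = x mod m" if "x < m*d" for x using that m by (simp add: t_def)
  have tp: "t permutes {..<m*d}"
  proof (rule inj_imp_permutes)
    show "inj_on t {..<m*d}"
    proof (rule inj_onI)
      fix x y assume xy: "x \<in> {..<m*d}" "y \<in> {..<m*d}" "t x = t y"
      then have "\<sigma> (x div m) = \<sigma> (y div m)" using tdiv by (metis lessThan_iff)
      then have "x div m = y div m" using injD[OF permutes_inj[OF s]] by blast
      moreover have "x mod m = y mod m" using xy tmod by (metis lessThan_iff)
      ultimately show "x = y" by (rule divmod_eq)
    qed
  qed (use tl in \<open>auto simp: t_def\<close>)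
  have tO: "t \<in> Omega_perms m d"
    unfolding Omega_char[OF m] WRp_def using tp tdiv tmod by auto
  define h where "h = \<pi> \<circ> iv t"
  have "h x div m = x div m" if x: "x < m*d" for x
  proof -
    have y: "iv t x < m*d" using permutes_in_image[OF permutes_inv[OF tp]] x by simp
    have "h x div m = \<sigma> (iv t x div m)" using key y by (simp add: h_def)
    also have "\<dots> = t (iv t x) div m" using tdiv[OF y] by simp
    finally show ?thesis by (simp add: permutes_inverses[OF tp])
  qed
  then have hW: "h \<in> W0_perms m d"
    unfolding W0_char[OF m] h_def using permutes_compose[OF permutes_inv[OF tp] p] by (auto simp: h_def)
  have "\<pi> = h \<otimes>\<^bsub>wreath_grp m d\<^esub> t"
    by (simp add: W_simps h_def comp_assoc permutes_inv_o(2)[OF tp])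
  then show "\<pi> \<in> set_mult (wreath_grp m d) (W0_perms m d) (Omega_perms m d)"
    unfolding set_mult_def using hW tO by blast
qed

lemma S_mem: "s \<in> simple_refls m d \<longleftrightarrow> (\<exists>j a. j < d \<and> a + 1 < m \<and> s = Transposition.transpose (j*m+a) (j*m+a+1))"
  unfolding simple_refls_def by blast

lemma blk_div: "b < m \<Longrightarrow> (j*m+b) div (m::nat) = j" by simp

lemma transp_W0:
  assumes m: "0 < m" and x: "x < m*d" and y: "y < m*d" and xy: "x div m = y div m"
  shows "Transposition.transpose x y \<in> W0_perms m d"
  unfolding W0_char[OF m] using permutes_swap_id[of x "{..<m*d}" y] x y xy
  by (auto simp: transpose_def)

lemma S_W0:
  assumes m: "0 < m"
  shows "simple_refls m d \<subseteq> W0_perms m d"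
proof
  fix s assume "s \<in> simple_refls m d"
  then obtain j a where ja: "j < d" "a + 1 < m" and s: "s = Transposition.transpose (j*m+a) (j*m+a+1)"
    unfolding S_mem by blast
  have "j*m+a < m*d" "j*m+(a+1) < m*d" using blk_lt[OF ja(1), of a m] blk_lt[OF ja(1), of "a+1" m] ja(2) by auto
  moreover have "(j*m+a) div m = j" using ja by simp
  moreover have "(j*m+(a+1)) div m = j" using ja(2) by (rule blk_div)
  ultimately have "Transposition.transpose (j*m+a) (j*m+(a+1)) \<in> W0_perms m d" using transp_W0[OF m] by metis
  then show "s \<in> W0_perms m d" unfolding s by simp
qed

lemma S_invol: "s \<in> simple_refls m d \<Longrightarrow> s \<circ> s = id \<and> s \<noteq> id"
  unfolding S_mem by (auto simp: transpose_eq_id_iff)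

lemma S_in: "j < d \<Longrightarrow> b + 1 < m \<Longrightarrow> Transposition.transpose (j*m+b) (j*m+Suc b) \<in> simple_refls m d"
  unfolding S_mem by (intro exI[of _ j] exI[of _ b]) simp

lemma adj_gen:
  assumes m: "0 < m" and j: "j < d"
  shows "a < b \<Longrightarrow> b < m \<Longrightarrow> Transposition.transpose (j*m+a) (j*m+b) \<in> generate (wreath_grp m d) (simple_refls m d)"
proof (induction b)
  case 0 then show ?case by simp
next
  case (Suc b)
  show ?case
  proof (cases "a = b")
    case True
    then show ?thesis using Suc j S_in[of j d b m] by (intro generate.incl) simp
  next
    case False
    then have ab: "a < b" using Suc by simp
    have IH: "Transposition.transpose (j*m+a) (j*m+b) \<in> generate (wreath_grp m d) (simple_refls m d)"
      using Suc ab by simp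
    have T: "Transposition.transpose (j*m+b) (j*m+Suc b) \<in> generate (wreath_grp m d) (simple_refls m d)"
      using Suc j ab S_in[of j d b m] by (intro generate.incl) simp
    have e: "Transposition.transpose (j*m+Suc b) (j*m+b) \<circ> Transposition.transpose (j*m+b) (j*m+a)
          \<circ> Transposition.transpose (j*m+Suc b) (j*m+b) = Transposition.transpose (j*m+Suc b) (j*m+a)"
      using ab by (intro transpose_comp_triple) auto
    have "Transposition.transpose (j*m+b) (j*m+Suc b) \<otimes>\<^bsub>wreath_grp m d\<^esub> Transposition.transpose (j*m+a) (j*m+b)
       \<otimes>\<^bsub>wreath_grp m d\<^esub> Transposition.transpose (j*m+b) (j*m+Suc b) \<in> generate (wreath_grp m d) (simple_refls m d)"
      using IH T by (intro generate.eng)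
    moreover have "Transposition.transpose (j*m+b) (j*m+Suc b) \<circ> Transposition.transpose (j*m+a) (j*m+b)
          \<circ> Transposition.transpose (j*m+b) (j*m+Suc b) = Transposition.transpose (j*m+a) (j*m+Suc b)"
      using e by (metis transpose_commute)
    ultimately show ?thesis by (simp add: W_simps)
  qed
qed

lemma transp_gen:
  assumes m: "0 < m" and x: "x < m*d" and y: "y < m*d" and xy: "x div m = y div m" and ne: "x \<noteq> y"
  shows "Transposition.transpose x y \<in> generate (wreath_grp m d) (simple_refls m d)"
proof -
  have gen: "Transposition.transpose x y \<in> generate (wreath_grp m d) (simple_refls m d)"
    if x: "x < m*d" and y: "y < m*d" and xy: "x div m = y div m" and lt: "x < y" for x y
  proof -
    have j: "x div m < d" using div_lt[OF m x] .
    have "x mod m < y mod m" using lt xy by (metis div_mult_mod_eq nat_add_left_cancel_less)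
    moreover have "y mod m < m" using m by simp
    ultimately have "Transposition.transpose ((x div m)*m + x mod m) ((x div m)*m + y mod m) \<in> generate (wreath_grp m d) (simple_refls m d)"
      using adj_gen[OF m j] by blast
    moreover have "(x div m)*m + x mod m = x" by simp
    moreover have "(x div m)*m + y mod m = y" using xy by (metis div_mult_mod_eq)
    ultimately show ?thesis by simp
  qed
  show ?thesis
  proof (cases "x < y")
    case True then show ?thesis using gen x y xy by blast
  next
    case False then have "y < x" using ne by simp
    then show ?thesis using gen[of y x] x y xy by (metis transpose_commute)
  qed
qed

lemma W0_gen:
  assumes m: "0 < m"
  shows "generate (wreath_grp m d) (simple_refls m d) = W0_perms m d"
proof
  interpret group "wreath_grp m d" by (rule W_group[OF m])
  show "generate (wreath_grp m d) (simple_refls m d) \<subseteq> W0_perms m d"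
    using generate_subgroup_incl[OF S_W0[OF m] W0_subgroup[OF m]] .
  have "\<forall>\<pi>. \<pi> \<in> W0_perms m d \<longrightarrow> card {x. \<pi> x \<noteq> x} = k \<longrightarrow> \<pi> \<in> generate (wreath_grp m d) (simple_refls m d)" for k
  proof (induction k rule: less_induct)
    case (less k)
    show ?case
    proof (intro allI impI)
      fix \<pi> assume \<pi>: "\<pi> \<in> W0_perms m d" and ck: "card {x. \<pi> x \<noteq> x} = k"
      then have p: "\<pi> permutes {..<m*d}" and kd: "\<forall>x<m*d. \<pi> x div m = x div m" by (auto simp: W0_char[OF m])
      show "\<pi> \<in> generate (wreath_grp m d) (simple_refls m d)"
      proof (cases "\<pi> = id")
        case True then show ?thesis using generate.one[of "wreath_grp m d"] by (simp add: W_simps)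
      next
        case False
        then obtain x where x: "\<pi> x \<noteq> x" by (metis eq_id_iff)
        then have xl: "x < m*d" using p by (meson lessThan_iff permutes_not_in)
        have pxl: "\<pi> x < m*d" using permutes_in_image[OF p] xl by simp
        have dv: "x div m = \<pi> x div m" using kd xl by simp
        define \<pi>' where "\<pi>' = Transposition.transpose x (\<pi> x) \<circ> \<pi>"
        have tW: "Transposition.transpose x (\<pi> x) \<in> W0_perms m d" using transp_W0[OF m xl pxl dv] .
        have "Transposition.transpose x (\<pi> x) \<otimes>\<^bsub>wreath_grp m d\<^esub> \<pi> \<in> W0_perms m d"
          using subgroup.m_closed[OF W0_subgroup[OF m] tW \<pi>] .
        then have \<pi>'W: "\<pi>' \<in> W0_perms m d" unfolding \<pi>'_def by (simp add: W_simps)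
        have "{x. \<pi> x \<noteq> x} \<subseteq> {..<m*d}" using p unfolding permutes_def by auto
        then have fin: "finite {x. \<pi> x \<noteq> x}" using finite_subset by blast
        have sub: "{y. \<pi>' y \<noteq> y} \<subseteq> {y. \<pi> y \<noteq> y} - {x}"
        proof
          fix y assume "y \<in> {y. \<pi>' y \<noteq> y}"
          then have ny: "\<pi>' y \<noteq> y" by simp
          have "y \<noteq> x"
          proof
            assume "y = x"
            then show False using ny by (simp add: \<pi>'_def)
          qed
          moreover have "\<pi> y \<noteq> y"
          proof
            assume py: "\<pi> y = y"
            have "y \<noteq> \<pi> x"
            proof
              assume "y = \<pi> x"
              then have "\<pi> (\<pi> x) = \<pi> x" using py by simp
              then have "\<pi> x = x" using injD[OF permutes_inj[OF p]] by blast
              then show False using x by simp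
            qed
            then show False using ny py \<open>y \<noteq> x\<close> by (simp add: \<pi>'_def transpose_def)
          qed
          ultimately show "y \<in> {y. \<pi> y \<noteq> y} - {x}" by simp
        qed
        have "card {y. \<pi>' y \<noteq> y} < k"
        proof -
          have "card {y. \<pi>' y \<noteq> y} \<le> card ({y. \<pi> y \<noteq> y} - {x})" using sub fin by (intro card_mono) auto
          also have "\<dots> < card {y. \<pi> y \<noteq> y}" using fin x by (intro card_Diff1_less) auto
          finally show ?thesis using ck by simp
        qed
        then have g': "\<pi>' \<in> generate (wreath_grp m d) (simple_refls m d)" using less.IH \<pi>'W by blast
        have gt: "Transposition.transpose x (\<pi> x) \<in> generate (wreath_grp m d) (simple_refls m d)"
          using transp_gen[OF m xl pxl dv] x by auto
        have "Transposition.transpose x (\<pi> x) \<otimes>\<^bsub>wreath_grp m d\<^esub> \<pi>' \<in> generate (wreath_grp m d) (simple_refls m d)"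
          using gt g' by (rule generate.eng)
        moreover have "Transposition.transpose x (\<pi> x) \<otimes>\<^bsub>wreath_grp m d\<^esub> \<pi>' = \<pi>"
          by (simp add: W_simps \<pi>'_def o_assoc)
        ultimately show ?thesis by simp
      qed
    qed
  qed
  then show "W0_perms m d \<subseteq> generate (wreath_grp m d) (simple_refls m d)" by blast
qed

lemma monom_inverse:
  fixes A :: "'a::field mat"
  assumes p: "\<pi> permutes {..<n}" and A: "monom n \<pi> A"
  shows "\<exists>Y. monom n (iv \<pi>) Y \<and> A * Y = 1\<^sub>m n \<and> Y * A = 1\<^sub>m n"
proof -
  have Ac: "A \<in> carrier_mat n n" using A by (auto simp: monom_def)
  define Y where "Y = mat n n (\<lambda>(i,k). if k = \<pi> i then 1 / A $$ (k,i) else (0::'a))"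
  have Yc: "Y \<in> carrier_mat n n" by (simp add: Y_def)
  have AY: "A * Y = 1\<^sub>m n"
  proof (rule eq_matI)
    fix i k assume "i < dim_row (1\<^sub>m n :: 'a mat)" "k < dim_col (1\<^sub>m n :: 'a mat)"
    then have ik: "i < n" "k < n" by auto
    have ik': "iv \<pi> k < n" using p ik permutes_inv permutes_in_image by fastforce
    have "(A * Y) $$ (i,k) = A $$ (i, iv \<pi> k) * Y $$ (iv \<pi> k, k)"
      unfolding mult_entry[OF Ac Yc ik]
      using ik ik' by (intro sum_single) (auto simp: Y_def permutes_inverses[OF p])
    also have "\<dots> = (if i = k then 1 else 0)"
    proof -
      have "(A $$ (i, iv \<pi> k) \<noteq> 0) = (i = \<pi> (iv \<pi> k))" using A ik ik' unfolding monom_def by blast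
      then have e: "(A $$ (i, iv \<pi> k) \<noteq> 0) = (i = k)" by (simp add: permutes_inverses[OF p])
      show ?thesis using e ik ik' by (auto simp: Y_def permutes_inverses[OF p])
    qed
    finally show "(A * Y) $$ (i,k) = 1\<^sub>m n $$ (i,k)" using ik by simp
  qed (use Ac Yc in auto)
  have "monom n (iv \<pi>) Y"
    unfolding monom_def
  proof (intro conjI allI impI)
    show "Y \<in> carrier_mat n n" by (rule Yc)
    fix i k assume ik: "i < n" "k < n"
    have pi: "\<pi> i < n" using permutes_in_image[OF p] ik by simp
    have "A $$ (\<pi> i, i) \<noteq> 0" using A ik pi unfolding monom_def by blast
    then show "(Y $$ (i,k) \<noteq> 0) = (i = iv \<pi> k)"
      using ik by (auto simp: Y_def permutes_inv_eq[OF p] permutes_inverses[OF p])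
  qed
  moreover have "Y * A = 1\<^sub>m n" using mat_mult_left_right_inverse[OF Ac Yc AY] .
  ultimately show ?thesis using AY by blast
qed

lemma N_char:
  assumes m: "0 < m"
  shows "(N_md m d :: 'a::field mat set) = {A. \<exists>\<pi>. WRp m d \<pi> \<and> monom (m*d) \<pi> A}"
proof (intro Set.set_eqI iffI)
  fix A :: "'a mat" assume "A \<in> N_md m d"
  then obtain \<pi> D where A: "A = perm_matrix (m*d) \<pi> * D" and \<pi>: "\<pi> \<in> wreath_perms m d" and D: "D \<in> T_md m d"
    unfolding N_md_def by blast
  have W: "WRp m d \<pi>" using \<pi> by (simp add: wreath_char[OF m])
  then have p: "\<pi> permutes {..<m*d}" by (simp add: WRp_def)
  have "monom (m*d) (\<pi> \<circ> id) A" unfolding A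
    using monom_mult[OF p permutes_id monom_perm[OF p]] D by (simp add: T_monom_iff)
  then show "A \<in> {A. \<exists>\<pi>. WRp m d \<pi> \<and> monom (m*d) \<pi> A}" using W by auto
next
  fix A :: "'a mat" assume "A \<in> {A. \<exists>\<pi>. WRp m d \<pi> \<and> monom (m*d) \<pi> A}"
  then obtain \<pi> where W: "WRp m d \<pi>" and A: "monom (m*d) \<pi> A" by blast
  then have p: "\<pi> permutes {..<m*d}" by (simp add: WRp_def)
  have Ac: "A \<in> carrier_mat (m*d) (m*d)" using A by (simp add: monom_def)
  define D where "D = mat (m*d) (m*d) (\<lambda>(i,k). if i = k then A $$ (\<pi> k, k) else (0::'a))"
  have Dc: "D \<in> carrier_mat (m*d) (m*d)" by (simp add: D_def)
  have "monom (m*d) id D" unfolding monom_def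
  proof (intro conjI allI impI)
    show "D \<in> carrier_mat (m*d) (m*d)" by (rule Dc)
    fix i k assume ik: "i < m*d" "k < m*d"
    have "\<pi> k < m*d" using permutes_in_image[OF p] ik by simp
    then have "A $$ (\<pi> k, k) \<noteq> 0" using A ik unfolding monom_def by blast
    then show "(D $$ (i,k) \<noteq> 0) = (i = id k)" using ik by (simp add: D_def)
  qed
  then have DT: "D \<in> T_md m d" by (simp add: T_monom_iff)
  have "perm_matrix (m*d) \<pi> * D = A"
  proof (rule eq_matI)
    fix i k assume "i < dim_row A" "k < dim_col A"
    then have ik: "i < m*d" "k < m*d" using Ac by auto
    have ik': "iv \<pi> i < m*d" using permutes_in_image[OF permutes_inv[OF p]] ik by simp
    have "(perm_matrix (m*d) \<pi> * D) $$ (i,k) = D $$ (iv \<pi> i, k)" using perm_mult_left[OF p Dc ik] .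
    also have "\<dots> = A $$ (i,k)"
    proof (cases "iv \<pi> i = k")
      case True
      then have "i = \<pi> k" by (metis permutes_inverses(1)[OF p])
      then show ?thesis using True ik ik' by (simp add: D_def)
    next
      case False
      then have "i \<noteq> \<pi> k" by (metis permutes_inverses(2)[OF p])
      then have "A $$ (i,k) = 0" using A ik unfolding monom_def by blast
      then show ?thesis using False ik ik' by (simp add: D_def)
    qed
    finally show "(perm_matrix (m*d) \<pi> * D) $$ (i,k) = A $$ (i,k)" .
  qed (use Ac Dc in \<open>auto simp: perm_matrix_def\<close>)
  then show "A \<in> N_md m d" unfolding N_md_def using W DT by (auto simp: wreath_char[OF m])
qed

lemma N_subgroup:
  assumes m: "0 < m"
  shows "subgroup (N_md m d) (GL_grp (m*d) :: 'a::field mat monoid)"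
proof -
  interpret group "GL_grp (m*d) :: 'a mat monoid" by (rule GL_group)
  show ?thesis
  proof (rule subgroupI)
    show "N_md m d \<subseteq> carrier (GL_grp (m*d) :: 'a mat monoid)"
    proof
      fix A :: "'a mat" assume "A \<in> N_md m d"
      then obtain \<pi> where W: "WRp m d \<pi>" and A: "monom (m*d) \<pi> A" by (auto simp: N_char[OF m])
      then show "A \<in> carrier (GL_grp (m*d))"
        using monom_invertible[OF _ A] by (auto simp: GL_simps WRp_def monom_def)
    qed
    show "N_md m d \<noteq> {}" using monom_perm[OF permutes_id, of "m*d"] WRp_id by (auto simp: N_char[OF m])
  next
    fix A :: "'a mat" assume "A \<in> N_md m d"
    then obtain \<pi> where W: "WRp m d \<pi>" and A: "monom (m*d) \<pi> A" by (auto simp: N_char[OF m])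
    then have p: "\<pi> permutes {..<m*d}" by (simp add: WRp_def)
    obtain Y where Y: "monom (m*d) (iv \<pi>) Y" "A * Y = 1\<^sub>m (m*d)" "Y * A = 1\<^sub>m (m*d)"
      using monom_inverse[OF p A] by blast
    have AG: "A \<in> carrier (GL_grp (m*d))" using monom_invertible[OF p A] A by (auto simp: GL_simps monom_def)
    have YG: "Y \<in> carrier (GL_grp (m*d))"
      using monom_invertible[OF permutes_inv[OF p] Y(1)] Y(1) by (auto simp: GL_simps monom_def)
    have "inv\<^bsub>GL_grp (m*d)\<^esub> A = Y" using Y(3) AG YG by (intro inv_equality) (auto simp: GL_simps)
    then show "inv\<^bsub>GL_grp (m*d)\<^esub> A \<in> N_md m d" using Y(1) WRp_inv[OF m W] by (auto simp: N_char[OF m])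
  next
    fix A B :: "'a mat" assume "A \<in> N_md m d" "B \<in> N_md m d"
    then obtain \<pi> \<rho> where W: "WRp m d \<pi>" "WRp m d \<rho>" and A: "monom (m*d) \<pi> A" and B: "monom (m*d) \<rho> B"
      by (auto simp: N_char[OF m])
    have "monom (m*d) (\<pi> \<circ> \<rho>) (A * B)" using monom_mult[OF _ _ A B] W by (simp add: WRp_def)
    then show "A \<otimes>\<^bsub>GL_grp (m*d)\<^esub> B \<in> N_md m d" using WRp_comp[OF W] by (auto simp: N_char[OF m] GL_simps)
  qed
qed

lemma perm_le_id:
  fixes \<pi> :: "nat \<Rightarrow> nat"
  assumes p: "\<pi> permutes {..<n}" and le: "\<And>k. k < n \<Longrightarrow> \<pi> k \<le> k"
  shows "\<pi> = id"
proof -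
  have "k < n \<longrightarrow> \<pi> k = k" for k
  proof (induction k rule: less_induct)
    case (less k)
    show ?case
    proof
      assume k: "k < n"
      show "\<pi> k = k"
      proof (rule ccontr)
        assume "\<pi> k \<noteq> k"
        then have lt: "\<pi> k < k" using le[OF k] by simp
        then have "\<pi> (\<pi> k) = \<pi> k" using less.IH k by simp
        then have "\<pi> k = k" using injD[OF permutes_inj[OF p]] by blast
        then show False using lt by simp
      qed
    qed
  qed
  then show ?thesis using p unfolding permutes_def by (auto simp: fun_eq_iff)
qed

lemma BN_T:
  assumes m: "0 < m"
  shows "(B_md m d :: 'a::field mat set) \<inter> N_md m d = T_md m d"
proof (intro Set.set_eqI iffI)
  fix A :: "'a mat" assume "A \<in> B_md m d \<inter> N_md m d"
  then obtain \<pi> where W: "WRp m d \<pi>" and A: "monom (m*d) \<pi> A" and AB: "A \<in> B_md m d"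
    by (auto simp: N_char[OF m])
  then have p: "\<pi> permutes {..<m*d}" by (simp add: WRp_def)
  have "\<pi> k \<le> k" if k: "k < m*d" for k
  proof -
    have pk: "\<pi> k < m*d" using permutes_in_image[OF p] k by simp
    have "A $$ (\<pi> k, k) \<noteq> 0" using A k pk unfolding monom_def by blast
    then show ?thesis using AB k pk unfolding B_md_def by blast
  qed
  then have "\<pi> = id" using perm_le_id[OF p] by blast
  then show "A \<in> T_md m d" using A by (simp add: T_monom_iff)
next
  fix A :: "'a mat" assume A: "A \<in> T_md m d"
  then have "monom (m*d) id A" by (simp add: T_monom_iff)
  then have "A \<in> N_md m d" using WRp_id by (auto simp: N_char[OF m])
  moreover have "A \<in> B_md m d"
  proof -
    have "\<forall>i<m*d. \<forall>j<m*d. A $$ (i,j) \<noteq> 0 \<longrightarrow> i = j" using A unfolding T_monom_iff monom_def by simp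
    then show ?thesis using A unfolding B_md_def T_md_def by auto
  qed
  ultimately show "A \<in> B_md m d \<inter> N_md m d" by simp
qed

lemma WRp_perm: "WRp m d \<pi> \<Longrightarrow> \<pi> permutes {..<m*d}"
  by (simp add: WRp_def)

lemma NG_simps: "carrier (N_grp m d) = N_md m d" "mult (N_grp m d) = (*)" "one (N_grp m d) = 1\<^sub>m (m*d)"
  by (auto simp: N_grp_def GL_grp_def)

lemma N_uperm:
  assumes m: "0 < m" and A: "A \<in> (N_md m d :: 'a::field mat set)"
  shows "\<exists>\<pi>. WRp m d \<pi> \<and> monom (m*d) \<pi> A \<and> uperm (m*d) A = \<pi>"
proof -
  obtain \<pi> where W: "WRp m d \<pi>" and Am: "monom (m*d) \<pi> A" using A by (auto simp: N_char[OF m])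
  then show ?thesis using uperm_monom[OF WRp_perm[OF W] Am] by blast
qed

lemma NG_group: "0 < m \<Longrightarrow> group (N_grp m d :: 'a::field mat monoid)"
  unfolding N_grp_def by (rule subgroup.subgroup_is_group[OF N_subgroup GL_group])

lemma phi_hom:
  assumes m: "0 < m"
  shows "uperm (m*d) \<in> hom (N_grp m d :: 'a::field mat monoid) (wreath_grp m d)"
  unfolding hom_def
proof (intro CollectI conjI ballI)
  show "uperm (m*d) \<in> carrier (N_grp m d :: 'a mat monoid) \<rightarrow> carrier (wreath_grp m d)"
  proof
    fix A :: "'a mat" assume "A \<in> carrier (N_grp m d)"
    then show "uperm (m*d) A \<in> carrier (wreath_grp m d)" using N_uperm[OF m, of A]
      by (auto simp: NG_simps W_simps wreath_char[OF m])
  qed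
  fix A B :: "'a mat" assume "A \<in> carrier (N_grp m d)" "B \<in> carrier (N_grp m d)"
  then obtain \<pi> \<rho> where W: "WRp m d \<pi>" "WRp m d \<rho>" and Am: "monom (m*d) \<pi> A" "uperm (m*d) A = \<pi>"
    and Bm: "monom (m*d) \<rho> B" "uperm (m*d) B = \<rho>"
    using N_uperm[OF m, of A] N_uperm[OF m, of B] by (auto simp: NG_simps)
  have p: "\<pi> permutes {..<m*d}" "\<rho> permutes {..<m*d}" using W by (simp_all add: WRp_perm)
  have "monom (m*d) (\<pi> \<circ> \<rho>) (A * B)" using monom_mult[OF p Am(1) Bm(1)] .
  then have "uperm (m*d) (A * B) = \<pi> \<circ> \<rho>" using uperm_monom permutes_compose[OF p(2) p(1)] by blast
  then show "uperm (m*d) (A \<otimes>\<^bsub>N_grp m d\<^esub> B) = uperm (m*d) A \<otimes>\<^bsub>wreath_grp m d\<^esub> uperm (m*d) B"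
    using Am Bm by (simp add: NG_simps W_simps)
qed

lemma phi_img:
  assumes m: "0 < m"
  shows "uperm (m*d) ` (N_md m d :: 'a::field mat set) = carrier (wreath_grp m d)"
    and "\<pi> \<in> carrier (wreath_grp m d) \<Longrightarrow> (perm_matrix (m*d) \<pi> :: 'a mat) \<in> N_md m d \<and> uperm (m*d) (perm_matrix (m*d) \<pi> :: 'a mat) = \<pi>"
proof -
  have *: "(perm_matrix (m*d) \<pi> :: 'a mat) \<in> N_md m d \<and> uperm (m*d) (perm_matrix (m*d) \<pi> :: 'a mat) = \<pi>"
    if "\<pi> \<in> carrier (wreath_grp m d)" for \<pi>
  proof -
    have W: "WRp m d \<pi>" using that by (simp add: W_simps wreath_char[OF m])
    then have p: "\<pi> permutes {..<m*d}" by (simp add: WRp_def)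
    show ?thesis using monom_perm[OF p] uperm_monom[OF p] W by (auto simp: N_char[OF m])
  qed
  then show "\<pi> \<in> carrier (wreath_grp m d) \<Longrightarrow> (perm_matrix (m*d) \<pi> :: 'a mat) \<in> N_md m d \<and> uperm (m*d) (perm_matrix (m*d) \<pi> :: 'a mat) = \<pi>"
    by blast
  show "uperm (m*d) ` (N_md m d :: 'a::field mat set) = carrier (wreath_grp m d)"
  proof
    show "uperm (m*d) ` (N_md m d :: 'a::field mat set) \<subseteq> carrier (wreath_grp m d)"
      using N_uperm[OF m] by (fastforce simp: W_simps wreath_char[OF m])
    show "carrier (wreath_grp m d) \<subseteq> uperm (m*d) ` (N_md m d :: 'a::field mat set)"
      using * by (metis image_eqI subsetI)
  qed
qed

lemma phi_kernel:
  assumes m: "0 < m"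
  shows "kernel (N_grp m d :: 'a::field mat monoid) (wreath_grp m d) (uperm (m*d)) = T_md m d"
proof (intro Set.set_eqI iffI)
  fix A :: "'a mat" assume "A \<in> kernel (N_grp m d) (wreath_grp m d) (uperm (m*d))"
  then have A: "A \<in> N_md m d" and u: "uperm (m*d) A = id" by (auto simp: kernel_def NG_simps W_simps)
  then show "A \<in> T_md m d" using N_uperm[OF m A] by (auto simp: T_monom_iff)
next
  fix A :: "'a mat" assume A: "A \<in> T_md m d"
  then have Am: "monom (m*d) id A" by (simp add: T_monom_iff)
  then have "A \<in> N_md m d" using WRp_id by (auto simp: N_char[OF m])
  moreover have "uperm (m*d) A = id" using uperm_monom[OF permutes_id Am] .
  ultimately show "A \<in> kernel (N_grp m d) (wreath_grp m d) (uperm (m*d))" by (simp add: kernel_def NG_simps W_simps)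
qed

lemma phi_group_hom:
  assumes m: "0 < m"
  shows "group_hom (N_grp m d :: 'a::field mat monoid) (wreath_grp m d) (uperm (m*d))"
  unfolding group_hom_def group_hom_axioms_def using NG_group[OF m] W_group[OF m] phi_hom[OF m] by blast

lemma Omega_inv:
  assumes m: "0 < m" and t: "t \<in> Omega_perms m d"
  shows "iv t \<in> Omega_perms m d"
proof -
  interpret group "wreath_grp m d" by (rule W_group[OF m])
  have "t \<in> carrier (wreath_grp m d)" using subgroup.subset[OF Omega_subgroup[OF m]] t by blast
  then show ?thesis using subgroup.m_inv_closed[OF Omega_subgroup[OF m] t] W_inv[OF m] by simp
qed

lemma conj_entry:
  assumes p: "\<pi> permutes {..<n}" and A: "A \<in> carrier_mat n n" and ik: "i < n" "k < n"
  shows "(perm_matrix n \<pi> * A * perm_matrix n (iv \<pi>)) $$ (i,k) = (A :: 'a::field mat) $$ (iv \<pi> i, iv \<pi> k)"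
proof -
  have k': "iv \<pi> k < n" using permutes_in_image[OF permutes_inv[OF p]] ik by simp
  have "(perm_matrix n \<pi> * A * perm_matrix n (iv \<pi>)) $$ (i,k) = (perm_matrix n \<pi> * A) $$ (i, iv \<pi> k)"
    using perm_mult_right[OF permutes_inv[OF p] mult_carrier_mat[OF perm_matrix_carrier A] ik] .
  also have "\<dots> = A $$ (iv \<pi> i, iv \<pi> k)" using perm_mult_left[OF p A ik(1) k'] .
  finally show ?thesis .
qed

lemma Omega_props:
  assumes m: "0 < m" and t: "t \<in> Omega_perms m d"
  shows "t permutes {..<m*d}" "\<And>x y. x < m*d \<Longrightarrow> y < m*d \<Longrightarrow> x div m = y div m \<Longrightarrow> t x div m = t y div m"
    "\<And>x. x < m*d \<Longrightarrow> t x mod m = x mod m"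
proof -
  have W: "WRp m d t" and md: "\<forall>x<m*d. t x mod m = x mod m" using t by (auto simp: Omega_char[OF m])
  show "t permutes {..<m*d}" using W by (rule WRp_perm)
  show "\<And>x y. x < m*d \<Longrightarrow> y < m*d \<Longrightarrow> x div m = y div m \<Longrightarrow> t x div m = t y div m"
    using W unfolding WRp_def by blast
  show "\<And>x. x < m*d \<Longrightarrow> t x mod m = x mod m" using md by blast
qed

lemma conj_B:
  assumes m: "0 < m" and t: "t \<in> Omega_perms m d" and b: "b \<in> (B_md m d :: 'a::field mat set)"
  shows "perm_matrix (m*d) t * b * perm_matrix (m*d) (iv t) \<in> B_md m d"
proof -
  note tp = Omega_props[OF m t]
  note ti = Omega_props[OF m Omega_inv[OF m t]]
  have bc: "b \<in> carrier_mat (m*d) (m*d)" "invertible_mat b" "respx (RB m) (m*d) b" using b by (auto simp: B_md_alt)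
  have inv: "invertible_mat (perm_matrix (m*d) t * b * perm_matrix (m*d) (iv t))"
  proof -
    have i1: "invertible_mat (perm_matrix (m*d) t * b)"
      using invertible_mult[OF perm_matrix_carrier bc(1) perm_matrix_invertible[OF tp(1)] bc(2)] .
    show ?thesis using invertible_mult[OF mult_carrier_mat[OF perm_matrix_carrier bc(1)] perm_matrix_carrier i1 perm_matrix_invertible[OF ti(1)]] .
  qed
  have "respx (RB m) (m*d) (perm_matrix (m*d) t * b * perm_matrix (m*d) (iv t))"
    unfolding respx_def
  proof (intro allI impI)
    fix i k assume i: "i < m*d" and k: "k < m*d" and nz: "(perm_matrix (m*d) t * b * perm_matrix (m*d) (iv t)) $$ (i,k) \<noteq> 0"
    let ?u = "iv t i" and ?v = "iv t k"
    have u: "?u < m*d" and v: "?v < m*d" using permutes_in_image[OF ti(1)] i k by auto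
    have "b $$ (?u, ?v) \<noteq> 0" using nz conj_entry[OF tp(1) bc(1) i k] by simp
    then have R: "?u div m = ?v div m" "?u \<le> ?v" using bc(3) u v unfolding respx_def RB_def by auto
    have tu: "t ?u = i" "t ?v = k" by (simp_all add: permutes_inverses[OF tp(1)])
    have d: "i div m = k div m" using tp(2)[OF u v R(1)] tu by simp
    have "?u mod m \<le> ?v mod m" using R by (metis div_mult_mod_eq nat_add_left_cancel_le)
    then have "i mod m \<le> k mod m" using tp(3)[OF u] tp(3)[OF v] tu by simp
    then have "i \<le> k" using d by (metis div_mult_mod_eq nat_add_left_cancel_le)
    then show "RB m i k" using d by (simp add: RB_def)
  qed
  moreover have "perm_matrix (m*d) t * b * perm_matrix (m*d) (iv t) \<in> carrier_mat (m*d) (m*d)"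
    using mult_carrier_mat[OF mult_carrier_mat[OF perm_matrix_carrier bc(1)] perm_matrix_carrier] .
  ultimately show ?thesis using inv by (auto simp: B_md_alt)
qed

lemma Omega_normalizes_B:
  assumes m: "0 < m" and t: "t \<in> Omega_perms m d"
  shows "triple_prod {perm_matrix (m*d) t} (B_md m d :: 'a::field mat set) {perm_matrix (m*d) (iv t)} = B_md m d"
proof
  show "triple_prod {perm_matrix (m*d) t} (B_md m d :: 'a mat set) {perm_matrix (m*d) (iv t)} \<subseteq> B_md m d"
    unfolding triple_prod_def using conj_B[OF m t] by blast
  show "B_md m d \<subseteq> triple_prod {perm_matrix (m*d) t} (B_md m d :: 'a mat set) {perm_matrix (m*d) (iv t)}"
  proof
    fix b :: "'a mat" assume b: "b \<in> B_md m d"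
    have tp: "t permutes {..<m*d}" using Omega_props[OF m t] by simp
    have it: "iv t \<in> Omega_perms m d" using Omega_inv[OF m t] .
    define c where "c = perm_matrix (m*d) (iv t) * b * perm_matrix (m*d) (iv (iv t))"
    have cB: "c \<in> B_md m d" unfolding c_def using conj_B[OF m it b] .
    have bc: "b \<in> carrier_mat (m*d) (m*d)" using b by (auto simp: B_md_alt)
    have cc: "c \<in> carrier_mat (m*d) (m*d)" using cB by (auto simp: B_md_alt)
    have "perm_matrix (m*d) t * c * perm_matrix (m*d) (iv t) = b"
    proof (rule eq_matI)
      fix i k assume "i < dim_row b" "k < dim_col b"
      then have ik: "i < m*d" "k < m*d" using bc by auto
      have ik': "iv t i < m*d" "iv t k < m*d" using permutes_in_image[OF permutes_inv[OF tp]] ik by auto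
      have "(perm_matrix (m*d) t * c * perm_matrix (m*d) (iv t)) $$ (i,k) = c $$ (iv t i, iv t k)"
        using conj_entry[OF tp cc ik] .
      also have "\<dots> = b $$ (iv (iv t) (iv t i), iv (iv t) (iv t k))"
        unfolding c_def using conj_entry[OF permutes_inv[OF tp] bc ik'] .
      also have "\<dots> = b $$ (i,k)" by (simp add: permutes_inv_inv[OF tp] permutes_inverses[OF tp])
      finally show "(perm_matrix (m*d) t * c * perm_matrix (m*d) (iv t)) $$ (i,k) = b $$ (i,k)" .
    qed (use bc in \<open>auto simp: perm_matrix_def\<close>)
    then show "b \<in> triple_prod {perm_matrix (m*d) t} (B_md m d) {perm_matrix (m*d) (iv t)}"
      unfolding triple_prod_def using cB by blast
  qed
qed

lemma conj_transpose:
  assumes p: "t permutes S"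
  shows "t \<circ> Transposition.transpose u v \<circ> iv t = Transposition.transpose (t u) (t v)"
proof
  fix x
  have "t (Transposition.transpose u v (iv t x)) = Transposition.transpose (t u) (t v) x"
    by (cases "x = t u"; cases "x = t v") (auto simp: transpose_def permutes_inverses[OF p] permutes_inv_eq[OF p])
  then show "(t \<circ> Transposition.transpose u v \<circ> iv t) x = Transposition.transpose (t u) (t v) x" by simp
qed

lemma Omega_conj_S_sub:
  assumes m: "0 < m" and t: "t \<in> Omega_perms m d"
  shows "(\<lambda>s. t \<circ> s \<circ> iv t) ` simple_refls m d \<subseteq> simple_refls m d"
proof
  fix x assume "x \<in> (\<lambda>s. t \<circ> s \<circ> iv t) ` simple_refls m d"
  then obtain s where s: "s \<in> simple_refls m d" "x = t \<circ> s \<circ> iv t" by blast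
  then obtain j a where ja: "j < d" "a + 1 < m" and x: "x = t \<circ> Transposition.transpose (j*m+a) (j*m+a+1) \<circ> iv t"
    unfolding S_mem by blast
  obtain \<sigma> where s: "\<sigma> permutes {..<d}" and f: "\<forall>j<d. \<forall>a<m. t (j*m+a) = \<sigma> j * m + a"
    using t unfolding Omega_perms_def by blast
  have tp: "t permutes {..<m*d}" using Omega_props[OF m t] by simp
  have x2: "x = t \<circ> Transposition.transpose (j*m+a) (j*m+(a+1)) \<circ> iv t" using x by (simp only: add.assoc)
  have e1: "t (j*m+a) = \<sigma> j * m + a" using f ja by simp
  have e2: "t (j*m+(a+1)) = \<sigma> j * m + (a+1)" using f ja by blast
  have "x = Transposition.transpose (\<sigma> j * m + a) (\<sigma> j * m + (a+1))"
    unfolding x2 conj_transpose[OF tp] e1 e2 by (rule refl)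
  then have "x = Transposition.transpose (\<sigma> j * m + a) (\<sigma> j * m + a + 1)" by (simp only: add.assoc)
  moreover have "\<sigma> j < d" using permutes_in_image[OF s] ja by simp
  ultimately show "x \<in> simple_refls m d" unfolding S_mem using ja by blast
qed

lemma Omega_conj_S:
  assumes m: "0 < m" and t: "t \<in> Omega_perms m d"
  shows "(\<lambda>s. t \<circ> s \<circ> iv t) ` simple_refls m d = simple_refls m d"
proof
  show "(\<lambda>s. t \<circ> s \<circ> iv t) ` simple_refls m d \<subseteq> simple_refls m d" using Omega_conj_S_sub[OF m t] .
  show "simple_refls m d \<subseteq> (\<lambda>s. t \<circ> s \<circ> iv t) ` simple_refls m d"
  proof
    fix s assume s: "s \<in> simple_refls m d"
    have tp: "t permutes {..<m*d}" using Omega_props[OF m t] by simp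
    have "iv t \<circ> s \<circ> iv (iv t) \<in> simple_refls m d" using Omega_conj_S_sub[OF m Omega_inv[OF m t]] s by blast
    moreover have "s = t \<circ> (iv t \<circ> s \<circ> iv (iv t)) \<circ> iv t"
      by (simp add: fun_eq_iff permutes_inv_inv[OF tp] permutes_inverses[OF tp])
    ultimately show "s \<in> (\<lambda>s. t \<circ> s \<circ> iv t) ` simple_refls m d" by blast
  qed
qed

lemma BPt_neq:
  assumes m: "0 < m" and t: "t \<in> Omega_perms m d" and nt: "t \<noteq> id"
  shows "set_prod (B_md m d :: 'a::field mat set) {perm_matrix (m*d) t} \<noteq> B_md m d"
proof
  assume eq: "set_prod (B_md m d :: 'a mat set) {perm_matrix (m*d) t} = B_md m d"
  have tp: "t permutes {..<m*d}" using Omega_props[OF m t] by simp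
  have "1\<^sub>m (m*d) \<in> (B_md m d :: 'a mat set)" using subgroup.one_closed[OF B_subgroup] by (simp add: GL_simps)
  then have "1\<^sub>m (m*d) * perm_matrix (m*d) t \<in> (B_md m d :: 'a mat set)" using eq unfolding set_prod_def by blast
  then have PB: "(perm_matrix (m*d) t :: 'a mat) \<in> B_md m d" by (metis left_mult_one_mat perm_matrix_carrier)
  have "t k \<le> k" if k: "k < m*d" for k
  proof -
    have tk: "t k < m*d" using permutes_in_image[OF tp] k by simp
    have "(perm_matrix (m*d) t :: 'a mat) $$ (t k, k) \<noteq> 0" using tk k by simp
    then show ?thesis using PB tk k unfolding B_md_def by blast
  qed
  then show False using perm_le_id[OF tp] nt by blast
qed



definition elm :: "nat \<Rightarrow> nat \<Rightarrow> nat \<Rightarrow> 'a::field \<Rightarrow> 'a mat" where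
  "elm n p r c = mat n n (\<lambda>(i,k). (if i = k then 1 else 0) + (if i = p \<and> k = r then c else 0))"

definition dg :: "nat \<Rightarrow> (nat \<Rightarrow> 'a::field) \<Rightarrow> 'a mat" where
  "dg n f = mat n n (\<lambda>(i,k). if i = k then f i else 0)"

lemma elm_carrier[simp]: "elm n p r c \<in> carrier_mat n n" by (simp add: elm_def)
lemma dg_carrier[simp]: "dg n f \<in> carrier_mat n n" by (simp add: dg_def)

lemma elm_index: "i < n \<Longrightarrow> k < n \<Longrightarrow> elm n p r c $$ (i,k) = (if i = k then 1 else 0) + (if i = p \<and> k = r then c else 0)"
  by (simp add: elm_def)

lemma elm_right:
  fixes A :: "'a::field mat"
  assumes A: "A \<in> carrier_mat n n" and ik: "i < n" "k < n" and pr: "p < n" "r < n"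
  shows "(A * elm n p r c) $$ (i,k) = A $$ (i,k) + (if k = r then c * A $$ (i,p) else 0)"
proof -
  have "(A * elm n p r c) $$ (i,k) = (\<Sum>l\<in>{0..<n}. A $$ (i,l) * elm n p r c $$ (l,k))"
    using mult_entry[OF A elm_carrier ik] .
  also have "\<dots> = (\<Sum>l\<in>{0..<n}. (if l = k then A $$ (i,l) else 0) + (if k = r then (if l = p then c * A $$ (i,l) else 0) else 0))"
    using ik by (intro sum.cong) (auto simp: elm_index algebra_simps)
  also have "\<dots> = A $$ (i,k) + (if k = r then c * A $$ (i,p) else 0)"
    using ik pr by (simp add: sum.distrib)
  finally show ?thesis .
qed

lemma elm_left:
  fixes A :: "'a::field mat"
  assumes A: "A \<in> carrier_mat n n" and ik: "i < n" "k < n" and pr: "p < n" "r < n"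
  shows "(elm n p r c * A) $$ (i,k) = A $$ (i,k) + (if i = p then c * A $$ (r,k) else 0)"
proof -
  have "(elm n p r c * A) $$ (i,k) = (\<Sum>l\<in>{0..<n}. elm n p r c $$ (i,l) * A $$ (l,k))"
    using mult_entry[OF elm_carrier A ik] .
  also have "\<dots> = (\<Sum>l\<in>{0..<n}. (if l = i then A $$ (l,k) else 0) + (if i = p then (if l = r then c * A $$ (l,k) else 0) else 0))"
    using ik by (intro sum.cong) (auto simp: elm_index algebra_simps)
  also have "\<dots> = A $$ (i,k) + (if i = p then c * A $$ (r,k) else 0)"
    using ik pr by (simp add: sum.distrib)
  finally show ?thesis .
qed

lemma dg_right:
  fixes A :: "'a::field mat"
  assumes A: "A \<in> carrier_mat n n" and ik: "i < n" "k < n"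
  shows "(A * dg n f) $$ (i,k) = A $$ (i,k) * f k"
proof -
  have "(A * dg n f) $$ (i,k) = (\<Sum>l\<in>{0..<n}. A $$ (i,l) * dg n f $$ (l,k))"
    using mult_entry[OF A dg_carrier ik] .
  also have "\<dots> = A $$ (i,k) * dg n f $$ (k,k)"
    using ik by (intro sum_single) (auto simp: dg_def)
  finally show ?thesis using ik by (simp add: dg_def)
qed

lemma elm_inv:
  assumes pr: "p < n" "r < n" "p \<noteq> r"
  shows "elm n p r c * elm n p r (- c) = (1\<^sub>m n :: 'a::field mat)"
proof (rule eq_matI)
  fix i k assume "i < dim_row (1\<^sub>m n :: 'a mat)" "k < dim_col (1\<^sub>m n :: 'a mat)"
  then have ik: "i < n" "k < n" by auto
  show "(elm n p r c * elm n p r (- c)) $$ (i,k) = (1\<^sub>m n :: 'a mat) $$ (i,k)"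
    unfolding elm_left[OF elm_carrier ik pr(1,2)] using ik pr by (auto simp: elm_index)
qed (auto simp: elm_def)

lemma elm_invertible:
  assumes pr: "p < n" "r < n" "p \<noteq> r"
  shows "invertible_mat (elm n p r c :: 'a::field mat)"
  using invertible_of_right_inv[OF elm_carrier elm_carrier elm_inv[OF pr]] .

lemma elm_zero: "elm n p r 0 = (1\<^sub>m n :: 'a::field mat)"
  by (rule eq_matI) (auto simp: elm_def)

lemma elm_B:
  assumes pr: "p < m*d" "r < m*d" "p < r" "p div m = r div m"
  shows "(elm (m*d) p r c :: 'a::field mat) \<in> B_md m d"
  unfolding B_md_alt using elm_invertible[of p "m*d" r c] pr
  by (auto simp: respx_def RB_def elm_index split: if_splits)

lemma one_B: "(1\<^sub>m (m*d) :: 'a::field mat) \<in> B_md m d"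
  using subgroup.one_closed[OF B_subgroup] by (simp add: GL_simps)

lemma B_mult: "A \<in> B_md m d \<Longrightarrow> B \<in> B_md m d \<Longrightarrow> (A * B :: 'a::field mat) \<in> B_md m d"
  using subgroup.m_closed[OF B_subgroup] by (simp add: GL_simps)

lemma dg_B:
  assumes f: "\<And>i. i < m*d \<Longrightarrow> f i \<noteq> 0"
  shows "(dg (m*d) f :: 'a::field mat) \<in> B_md m d"
proof -
  have M: "monom (m*d) id (dg (m*d) f)" using f by (auto simp: monom_def dg_def)
  have "respx (RB m) (m*d) (dg (m*d) f)" by (auto simp: respx_def dg_def RB_def)
  then show ?thesis using monom_invertible[OF permutes_id M] by (simp add: B_md_alt)
qed

lemma tits_main:
  fixes b :: "'a::field mat"
  assumes m: "0 < m" and j: "j < d" and a: "a + 1 < m" and W: "WRp m d w" and b: "b \<in> B_md m d"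
  shows "perm_matrix (m*d) (Transposition.transpose (j*m+a) (Suc (j*m+a))) * b * perm_matrix (m*d) w
     \<in> triple_prod (B_md m d) {perm_matrix (m*d) (Transposition.transpose (j*m+a) (Suc (j*m+a)) \<circ> w)} (B_md m d)
        \<union> triple_prod (B_md m d) {perm_matrix (m*d) w} (B_md m d)"
proof -
  define q where "q = j*m+a"
  define s where "s = Transposition.transpose q (Suc q)"
  have ql: "q < m*d" and q1l: "Suc q < m*d" using blk_lt[OF j, of a m] blk_lt[OF j, of "a+1" m] a by (auto simp: q_def)
  have qdiv: "q div m = j" "Suc q div m = j" using a blk_div[of "Suc a" m j] by (simp_all add: q_def)
  have sp: "s permutes {..<m*d}" unfolding s_def by (rule permutes_swap_id) (use ql q1l in auto)
  have ivs: "iv s = s" unfolding s_def by simp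
  have ss: "s (s x) = x" for x unfolding s_def by simp
  have sq: "s q = Suc q" "s (Suc q) = q" unfolding s_def by simp_all
  have sdiv: "s x div m = x div m" for x using qdiv by (cases "x = q"; cases "x = Suc q") (auto simp: s_def)
  have smono: "s k < s i" if "k < i" "\<not> (i = Suc q \<and> k = q)" for i k
    using that by (auto simp: s_def transpose_def)
  have wp: "w permutes {..<m*d}" using W by (rule WRp_perm)
  have Wi: "WRp m d (iv w)" using WRp_inv[OF m W] .
  have wip: "iv w permutes {..<m*d}" using permutes_inv[OF wp] .
  have wq: "iv w q < m*d" "iv w (Suc q) < m*d" using permutes_in_image[OF wip] ql q1l by auto
  have wqdiv: "iv w q div m = iv w (Suc q) div m" using Wi ql q1l qdiv unfolding WRp_def by metis
  have wqne: "iv w q \<noteq> iv w (Suc q)" using injD[OF permutes_inj[OF wip]] by fastforce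
  have bc: "b \<in> carrier_mat (m*d) (m*d)" "invertible_mat b" "respx (RB m) (m*d) b" using b by (auto simp: B_md_alt)
  have bqq: "b $$ (q,q) \<noteq> 0"
  proof (rule diag_nonzero[OF bc(1,2)])
    show "b $$ (i,k) = 0" if "i < m*d" "k < m*d" "k < i" for i k
      using bc(3) that unfolding respx_def RB_def by (meson leD)
  qed (rule ql)
  define c where "c = b $$ (q, Suc q) / b $$ (q,q)"
  define b1 where "b1 = b * elm (m*d) q (Suc q) (- c)"
  have b1B: "b1 \<in> B_md m d" unfolding b1_def using B_mult[OF b elm_B] ql q1l qdiv by simp
  have b1c: "b1 \<in> carrier_mat (m*d) (m*d)" unfolding b1_def using mult_carrier_mat[OF bc(1) elm_carrier] .
  have b1e: "b1 $$ (x,y) = b $$ (x,y) + (if y = Suc q then - c * b $$ (x,q) else 0)" if "x < m*d" "y < m*d" for x y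
    unfolding b1_def using elm_right[OF bc(1) that ql q1l] by simp
  have b1qq: "b1 $$ (q, Suc q) = 0" using b1e[OF ql q1l] bqq by (simp add: c_def)
  define b2 where "b2 = perm_matrix (m*d) s * b1 * perm_matrix (m*d) s"
  have b2c: "b2 \<in> carrier_mat (m*d) (m*d)" unfolding b2_def
    using mult_carrier_mat[OF mult_carrier_mat[OF perm_matrix_carrier b1c] perm_matrix_carrier] .
  have b2e: "b2 $$ (x,y) = b1 $$ (s x, s y)" if "x < m*d" "y < m*d" for x y
    using conj_entry[OF sp b1c that] by (simp add: b2_def ivs)
  have b2B: "b2 \<in> B_md m d"
  proof -
    have inv: "invertible_mat b2" unfolding b2_def
      using invertible_mult[OF mult_carrier_mat[OF perm_matrix_carrier b1c] perm_matrix_carrier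
          invertible_mult[OF perm_matrix_carrier b1c perm_matrix_invertible[OF sp]] perm_matrix_invertible[OF sp]]
        b1B by (auto simp: B_md_alt)
    have "respx (RB m) (m*d) b2" unfolding respx_def
    proof (intro allI impI)
      fix i k assume ik: "i < m*d" "k < m*d" and nz: "b2 $$ (i,k) \<noteq> 0"
      have sik: "s i < m*d" "s k < m*d" using permutes_in_image[OF sp] ik by auto
      have nz1: "b1 $$ (s i, s k) \<noteq> 0" using nz b2e[OF ik] by simp
      then have R: "RB m (s i) (s k)" using b1B sik by (auto simp: B_md_alt respx_def)
      have nqq: "\<not> (s i = q \<and> s k = Suc q)" using nz1 b1qq by auto
      have "i div m = k div m" using R sdiv[of i] sdiv[of k] by (simp add: RB_def)
      moreover have "i \<le> k"
      proof (rule ccontr)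
        assume "\<not> i \<le> k"
        then have "k < i" by simp
        moreover have "\<not> (i = Suc q \<and> k = q)" using nqq sq by auto
        ultimately have "s k < s i" by (rule smono)
        then show False using R by (simp add: RB_def)
      qed
      ultimately show "RB m i k" by (simp add: RB_def)
    qed
    then show ?thesis using inv b2c by (simp add: B_md_alt)
  qed
  have lhs: "(perm_matrix (m*d) s * b * perm_matrix (m*d) w) $$ (i,k) = b $$ (s i, w k)" if ik: "i < m*d" "k < m*d" for i k
  proof -
    have wk: "w k < m*d" using permutes_in_image[OF wp] ik by simp
    have "(perm_matrix (m*d) s * b * perm_matrix (m*d) w) $$ (i,k) = (perm_matrix (m*d) s * b) $$ (i, w k)"
      using perm_mult_right[OF wp mult_carrier_mat[OF perm_matrix_carrier bc(1)] ik] .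
    also have "\<dots> = b $$ (s i, w k)" using perm_mult_left[OF sp bc(1) ik(1) wk] by (simp add: ivs)
    finally show ?thesis .
  qed
  have lc: "perm_matrix (m*d) s * b * perm_matrix (m*d) w \<in> carrier_mat (m*d) (m*d)"
    using mult_carrier_mat[OF mult_carrier_mat[OF perm_matrix_carrier bc(1)] perm_matrix_carrier] .
  show ?thesis
  proof (cases "c = 0 \<or> iv w q < iv w (Suc q)")
    case True
    define z where "z = elm (m*d) (iv w q) (iv w (Suc q)) c"
    have zB: "z \<in> B_md m d"
    proof (cases "c = 0")
      case True then show ?thesis using one_B by (simp add: z_def elm_zero)
    next
      case False then have "iv w q < iv w (Suc q)" using \<open>c = 0 \<or> iv w q < iv w (Suc q)\<close> by simp
      then show ?thesis unfolding z_def using elm_B wq wqdiv by blast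
    qed
    have swp: "s \<circ> w permutes {..<m*d}" using permutes_compose[OF wp sp] .
    have "perm_matrix (m*d) s * b * perm_matrix (m*d) w = b2 * perm_matrix (m*d) (s \<circ> w) * z"
    proof (rule eq_matI)
      fix i k assume "i < dim_row (b2 * perm_matrix (m*d) (s \<circ> w) * z)" "k < dim_col (b2 * perm_matrix (m*d) (s \<circ> w) * z)"
      then have ik: "i < m*d" "k < m*d" using b2c by (auto simp: z_def elm_def)
      have si: "s i < m*d" using permutes_in_image[OF sp] ik by simp
      have wk: "w k < m*d" using permutes_in_image[OF wp] ik by simp
      have Y: "(b2 * perm_matrix (m*d) (s \<circ> w)) $$ (i,y) = b1 $$ (s i, w y)" if y: "y < m*d" for y
      proof -
        have "s (w y) < m*d" using permutes_in_image[OF swp] y by simp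
        then show ?thesis using perm_mult_right[OF swp b2c ik(1) y] b2e[OF ik(1)] by (simp add: ss)
      qed
      have "(b2 * perm_matrix (m*d) (s \<circ> w) * z) $$ (i,k)
          = b1 $$ (s i, w k) + (if k = iv w (Suc q) then c * b1 $$ (s i, w (iv w q)) else 0)"
        unfolding z_def using elm_right[OF mult_carrier_mat[OF b2c perm_matrix_carrier] ik wq] Y[OF ik(2)] Y[OF wq(1)] by simp
      also have "\<dots> = b $$ (s i, w k)"
      proof -
        have e1: "w (iv w q) = q" by (simp add: permutes_inverses[OF wp])
        have e2: "(k = iv w (Suc q)) = (w k = Suc q)" using permutes_inv_eq[OF wp] by metis
        show ?thesis unfolding e1 e2 using b1e[OF si wk] b1e[OF si ql] by auto
      qed
      finally show "(perm_matrix (m*d) s * b * perm_matrix (m*d) w) $$ (i,k) = (b2 * perm_matrix (m*d) (s \<circ> w) * z) $$ (i,k)"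
        using lhs[OF ik] by simp
    qed (use b2c in \<open>auto simp: z_def elm_def perm_matrix_def\<close>)
    then show ?thesis unfolding triple_prod_def s_def[symmetric] q_def[symmetric] using b2B zB by blast
  next
    case False
    then have c0: "c \<noteq> 0" and lt: "iv w (Suc q) < iv w q" using wqne by auto
    define u where "u = elm (m*d) q (Suc q) (1 / c)"
    define \<delta> where "\<delta> = (\<lambda>x. if x = q then - 1 / c else if x = Suc q then c else (1::'a))"
    define D where "D = dg (m*d) (\<lambda>k. \<delta> (w k))"
    define E where "E = elm (m*d) (iv w (Suc q)) (iv w q) (1 / c)"
    have xB: "b2 * u \<in> B_md m d" unfolding u_def using B_mult[OF b2B elm_B] ql q1l qdiv by simp
    have zB: "D * E \<in> B_md m d"
    proof -
      have "D \<in> B_md m d" unfolding D_def using c0 by (intro dg_B) (auto simp: \<delta>_def)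
      moreover have "E \<in> B_md m d" unfolding E_def using elm_B wq lt wqdiv by metis
      ultimately show ?thesis by (rule B_mult)
    qed
    let ?Y = "b2 * u * perm_matrix (m*d) w"
    have Yc: "?Y \<in> carrier_mat (m*d) (m*d)" unfolding u_def
      using mult_carrier_mat[OF mult_carrier_mat[OF b2c elm_carrier] perm_matrix_carrier] .
    have assoc: "?Y * (D * E) = ?Y * D * E" unfolding D_def E_def using assoc_mult_mat[OF Yc dg_carrier elm_carrier] by simp
    have "perm_matrix (m*d) s * b * perm_matrix (m*d) w = ?Y * (D * E)"
    proof (rule eq_matI)
      fix i k assume "i < dim_row (?Y * (D * E))" "k < dim_col (?Y * (D * E))"
      then have ik: "i < m*d" "k < m*d" using Yc by (auto simp: D_def E_def elm_def)
      have si: "s i < m*d" using permutes_in_image[OF sp] ik by simp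
      have wk: "w k < m*d" using permutes_in_image[OF wp] ik by simp
      have U: "(b2 * u) $$ (i,y) = b1 $$ (s i, s y) + (if y = Suc q then (1 / c) * b1 $$ (s i, Suc q) else 0)"
        if y: "y < m*d" for y
        unfolding u_def using elm_right[OF b2c ik(1) y ql q1l] b2e[OF ik(1) y] b2e[OF ik(1) ql] sq by simp
      have Y: "?Y $$ (i,y) = (b2 * u) $$ (i, w y)" if y: "y < m*d" for y
        using perm_mult_right[OF wp _ ik(1) y, of "b2 * u"] mult_carrier_mat[OF b2c elm_carrier] by (simp add: u_def)
      have YD: "(?Y * D) $$ (i,y) = (b2 * u) $$ (i, w y) * \<delta> (w y)" if y: "y < m*d" for y
        unfolding D_def using dg_right[OF Yc ik(1) y] Y[OF y] by simp
      have "(?Y * (D * E)) $$ (i,k) = (?Y * D * E) $$ (i,k)" using assoc by (rule arg_cong)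
      also have "\<dots> = (?Y * D) $$ (i,k) + (if k = iv w q then (1 / c) * (?Y * D) $$ (i, iv w (Suc q)) else 0)"
        unfolding E_def using elm_right[OF mult_carrier_mat[OF Yc dg_carrier] ik wq(2) wq(1), of "\<lambda>k. \<delta> (w k)" "1/c"]
        by (simp add: D_def)
      also have "\<dots> = (b2 * u) $$ (i, w k) * \<delta> (w k) + (if w k = q then (1 / c) * ((b2 * u) $$ (i, Suc q) * c) else 0)"
      proof -
        have e1: "w (iv w (Suc q)) = Suc q" by (simp add: permutes_inverses[OF wp])
        have e2: "(k = iv w q) = (w k = q)" using permutes_inv_eq[OF wp] by metis
        show ?thesis unfolding e2 YD[OF ik(2)] YD[OF wq(2)] e1 by (simp add: \<delta>_def)
      qed
      also have "\<dots> = b $$ (s i, w k)"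
      proof -
        have B1: "b1 $$ (s i, y) = b $$ (s i, y) + (if y = Suc q then - c * b $$ (s i, q) else 0)" if "y < m*d" for y
          using b1e[OF si that] .
        have sw: "s (w k) < m*d" using permutes_in_image[OF sp] wk by simp
        show ?thesis
        proof (cases "w k = q")
          case True
          then show ?thesis using U[OF wk] U[OF q1l] B1[OF q1l] B1[OF ql] sq c0 by (simp add: \<delta>_def field_simps)
        next
          case False
          show ?thesis
          proof (cases "w k = Suc q")
            case True
            then show ?thesis using U[OF wk] B1[OF q1l] B1[OF ql] sq c0 by (simp add: \<delta>_def field_simps)
          next
            case False
            then have "s (w k) = w k" using \<open>w k \<noteq> q\<close> by (simp add: s_def)
            then show ?thesis using U[OF wk] B1[OF wk] False \<open>w k \<noteq> q\<close> by (simp add: \<delta>_def)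
          qed
        qed
      qed
      finally show "(perm_matrix (m*d) s * b * perm_matrix (m*d) w) $$ (i,k) = (?Y * (D * E)) $$ (i,k)"
        using lhs[OF ik] by simp
    qed (use Yc in \<open>auto simp: D_def E_def elm_def perm_matrix_def\<close>)
    then show ?thesis unfolding triple_prod_def s_def[symmetric] q_def[symmetric] using xB zB by blast
  qed
qed

lemma sB_neq:
  assumes m: "0 < m" and j: "j < d" and a: "a + 1 < m"
  shows "set_prod {perm_matrix (m*d) (Transposition.transpose (j*m+a) (Suc (j*m+a)))} (B_md m d :: 'a::field mat set)
     \<noteq> set_prod (B_md m d) {perm_matrix (m*d) (Transposition.transpose (j*m+a) (Suc (j*m+a)))}"
proof
  define q where "q = j*m+a"
  define s where "s = Transposition.transpose q (Suc q)"
  have ql: "q < m*d" and q1l: "Suc q < m*d" using blk_lt[OF j, of a m] blk_lt[OF j, of "a+1" m] a by (auto simp: q_def)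
  have qdiv: "q div m = Suc q div m" using a blk_div[of "Suc a" m j] by (simp add: q_def)
  have sp: "s permutes {..<m*d}" unfolding s_def by (rule permutes_swap_id) (use ql q1l in auto)
  have ivs: "iv s = s" unfolding s_def by simp
  have sq: "s q = Suc q" "s (Suc q) = q" unfolding s_def by simp_all
  have ssid: "s \<circ> s = id" by (simp add: s_def)
  have PP: "perm_matrix (m*d) s * perm_matrix (m*d) s = (1\<^sub>m (m*d) :: 'a mat)"
    unfolding perm_matrix_comp[OF sp sp] ssid perm_matrix_id ..
  assume "set_prod {perm_matrix (m*d) (Transposition.transpose (j*m+a) (Suc (j*m+a)))} (B_md m d :: 'a mat set)
     = set_prod (B_md m d) {perm_matrix (m*d) (Transposition.transpose (j*m+a) (Suc (j*m+a)))}"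
  then have eq: "set_prod {perm_matrix (m*d) s} (B_md m d :: 'a mat set) = set_prod (B_md m d) {perm_matrix (m*d) s}"
    by (simp add: s_def q_def)
  define E where "E = (elm (m*d) q (Suc q) 1 :: 'a mat)"
  have EB: "E \<in> B_md m d" unfolding E_def by (rule elm_B) (use ql q1l qdiv in auto)
  then have "perm_matrix (m*d) s * E \<in> set_prod (B_md m d) {perm_matrix (m*d) s}"
    using eq unfolding set_prod_def by blast
  then obtain b' where b': "b' \<in> B_md m d" and e: "perm_matrix (m*d) s * E = b' * perm_matrix (m*d) s"
    unfolding set_prod_def by blast
  have b'c: "b' \<in> carrier_mat (m*d) (m*d)" using b' by (simp add: B_md_alt)
  have "perm_matrix (m*d) s * E * perm_matrix (m*d) s = b' * perm_matrix (m*d) s * perm_matrix (m*d) s"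
    using e by simp
  also have "\<dots> = b' * (perm_matrix (m*d) s * perm_matrix (m*d) s)"
    using assoc_mult_mat[OF b'c perm_matrix_carrier perm_matrix_carrier] .
  also have "\<dots> = b'" using PP b'c by simp
  finally have b'e: "b' = perm_matrix (m*d) s * E * perm_matrix (m*d) s" by simp
  have "b' $$ (Suc q, q) = E $$ (s (Suc q), s q)"
    using conj_entry[OF sp _ q1l ql, of E] b'e by (simp add: ivs E_def)
  also have "\<dots> = 1" using sq ql q1l by (simp add: E_def elm_index)
  finally have "b' $$ (Suc q, q) \<noteq> 0" by simp
  then have "RB m (Suc q) q" using b' ql q1l by (auto simp: B_md_alt respx_def)
  then show False by (simp add: RB_def)
qed

theorem proposition2p6:
  fixes m d :: nat
  assumes "m \<ge> 1" and "d \<ge> 1"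
  defines "B \<equiv> (B_md m d :: 'a::field mat set)"
    and "N \<equiv> (N_md m d :: 'a mat set)"
    and "T \<equiv> (T_md m d :: 'a mat set)"
    and "G \<equiv> (G_grp m d :: 'a mat monoid)"
    and "NG \<equiv> (N_grp m d :: 'a mat monoid)"
    and "P \<equiv> (perm_matrix (m*d) :: (nat \<Rightarrow> nat) \<Rightarrow> 'a mat)"
    and "W \<equiv> wreath_grp m d"
    and "W0 \<equiv> W0_perms m d"
    and "\<Omega> \<equiv> Omega_perms m d"
    and "S \<equiv> simple_refls m d"
  shows
    \<comment> \<open>G = <B, N>, with B and N subgroups\<close>
    "group G \<and> carrier G = generate (GL_grp (m*d)) (B \<union> N) \<and> subgroup B G \<and> subgroup N G
     \<comment> \<open>B \<inter> N = T, normal in N\<close>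
     \<and> B \<inter> N = T \<and> T \<lhd> NG
     \<comment> \<open>N/T = Sigma_m wr Sigma_d, via the underlying permutation\<close>
     \<and> group W
     \<and> (\<exists>\<phi>. \<phi> \<in> hom NG W \<and> \<phi> ` N = carrier W \<and> kernel NG W \<phi> = T
            \<and> (\<forall>\<pi>\<in>carrier W. P \<pi> \<in> N \<and> \<phi> (P \<pi>) = \<pi>))
     \<and> NG Mod T \<cong> W
     \<comment> \<open>W = W0 \<rtimes> \<Omega>, W0 generated by the involutions S\<close>
     \<and> W0 \<lhd> W \<and> subgroup \<Omega> W \<and> W0 \<inter> \<Omega> = {id} \<and> set_mult W W0 \<Omega> = carrier W
     \<and> S \<subseteq> W0 \<and> generate W S = W0 \<and> (\<forall>s\<in>S. s \<circ> s = id \<and> s \<noteq> id)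
     \<comment> \<open>\<Omega> normalizes B and S; B t \<noteq> B for t \<noteq> 1\<close>
     \<and> (\<forall>t\<in>\<Omega>. triple_prod {P t} B {P (Hilbert_Choice.inv t)} = B \<and> (\<lambda>s. t \<circ> s \<circ> Hilbert_Choice.inv t) ` S = S)
     \<and> (\<forall>t\<in>\<Omega>. t \<noteq> id \<longrightarrow> set_prod B {P t} \<noteq> B)
     \<comment> \<open>Tits axioms\<close>
     \<and> (\<forall>s\<in>S. \<forall>w\<in>carrier W.
          triple_prod {P s} B {P w} \<subseteq> triple_prod B {P (s \<circ> w)} B \<union> triple_prod B {P w} B
          \<and> set_prod {P s} B \<noteq> set_prod B {P s})"
proof -
  have m: "0 < m" using assms(1) by simp
  interpret GL: group "GL_grp (m*d) :: 'a mat monoid" by (rule GL_group)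
  have BG: "subgroup B (GL_grp (m*d))" unfolding B_def by (rule B_subgroup)
  have NGs: "subgroup N (GL_grp (m*d))" unfolding N_def by (rule N_subgroup[OF m])
  have BNsub: "B \<union> N \<subseteq> carrier (GL_grp (m*d))" using subgroup.subset[OF BG] subgroup.subset[OF NGs] by blast
  have gen: "subgroup (generate (GL_grp (m*d)) (B \<union> N)) (GL_grp (m*d))" using GL.generate_is_subgroup[OF BNsub] .
  have Gdef: "G = (GL_grp (m*d)) \<lparr>carrier := generate (GL_grp (m*d)) (B \<union> N)\<rparr>"
    by (simp add: G_def G_grp_def G_md_def B_def N_def)
  have c1: "group G" unfolding Gdef by (rule subgroup.subgroup_is_group[OF gen GL.is_group])
  have c2: "carrier G = generate (GL_grp (m*d)) (B \<union> N)" by (simp add: Gdef)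
  have c3: "subgroup B G" unfolding Gdef using GL.subgroup_incl[OF BG gen] generate.incl[of _ "B \<union> N"] by blast
  have c4: "subgroup N G" unfolding Gdef using GL.subgroup_incl[OF NGs gen] generate.incl[of _ "B \<union> N"] by blast
  have c5: "B \<inter> N = T" unfolding B_def N_def T_def by (rule BN_T[OF m])
  interpret h: group_hom NG W "uperm (m*d)" unfolding NG_def W_def by (rule phi_group_hom[OF m])
  have ker: "kernel NG W (uperm (m*d)) = T" unfolding NG_def W_def T_def by (rule phi_kernel[OF m])
  have c6: "T \<lhd> NG" using h.normal_kernel ker by simp
  have c7: "group W" unfolding W_def by (rule W_group[OF m])
  have img: "uperm (m*d) ` carrier NG = carrier W" using phi_img(1)[OF m] by (simp add: NG_def W_def NG_simps N_def)
  have c8: "\<exists>\<phi>. \<phi> \<in> hom NG W \<and> \<phi> ` N = carrier W \<and> kernel NG W \<phi> = T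
            \<and> (\<forall>\<pi>\<in>carrier W. P \<pi> \<in> N \<and> \<phi> (P \<pi>) = \<pi>)"
  proof -
    have "\<forall>\<pi>\<in>carrier W. P \<pi> \<in> N \<and> uperm (m*d) (P \<pi>) = \<pi>"
      unfolding P_def N_def W_def using phi_img(2)[OF m] by blast
    moreover have "uperm (m*d) ` N = carrier W" using img by (simp add: NG_def NG_simps N_def)
    ultimately show ?thesis using h.homh ker by blast
  qed
  have c9: "NG Mod T \<cong> W" using h.FactGroup_iso[OF img] ker by simp
  have c10: "W0 \<lhd> W" unfolding W0_def W_def by (rule W0_normal[OF m])
  have c11: "subgroup \<Omega> W" unfolding \<Omega>_def W_def by (rule Omega_subgroup[OF m])
  have c12: "W0 \<inter> \<Omega> = {id}" unfolding W0_def \<Omega>_def by (rule W0_Omega_int[OF m])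
  have c13: "set_mult W W0 \<Omega> = carrier W" unfolding W0_def \<Omega>_def W_def by (rule W_decomp[OF m])
  have c14: "S \<subseteq> W0" unfolding S_def W0_def by (rule S_W0[OF m])
  have c15: "generate W S = W0" unfolding S_def W0_def W_def by (rule W0_gen[OF m])
  have c16: "\<forall>s\<in>S. s \<circ> s = id \<and> s \<noteq> id" unfolding S_def using S_invol by blast
  have c17: "\<forall>t\<in>\<Omega>. triple_prod {P t} B {P (Hilbert_Choice.inv t)} = B \<and> (\<lambda>s. t \<circ> s \<circ> Hilbert_Choice.inv t) ` S = S"
    unfolding \<Omega>_def P_def B_def S_def using Omega_normalizes_B[OF m] Omega_conj_S[OF m] by blast
  have c18: "\<forall>t\<in>\<Omega>. t \<noteq> id \<longrightarrow> set_prod B {P t} \<noteq> B"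
    unfolding \<Omega>_def P_def B_def using BPt_neq[OF m] by blast
  have c19: "\<forall>s\<in>S. \<forall>w\<in>carrier W.
          triple_prod {P s} B {P w} \<subseteq> triple_prod B {P (s \<circ> w)} B \<union> triple_prod B {P w} B
          \<and> set_prod {P s} B \<noteq> set_prod B {P s}"
  proof (intro ballI conjI)
    fix s w assume s: "s \<in> S" and w: "w \<in> carrier W"
    obtain j a where ja: "j < d" "a + 1 < m" and se: "s = Transposition.transpose (j*m+a) (Suc (j*m+a))"
      using s unfolding S_def S_mem by auto
    have Ww: "WRp m d w" using w by (simp add: W_def W_simps wreath_char[OF m])
    show "triple_prod {P s} B {P w} \<subseteq> triple_prod B {P (s \<circ> w)} B \<union> triple_prod B {P w} B"
    proof
      fix x assume "x \<in> triple_prod {P s} B {P w}"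
      then obtain b where b: "b \<in> B" and x: "x = P s * b * P w" unfolding triple_prod_def by blast
      show "x \<in> triple_prod B {P (s \<circ> w)} B \<union> triple_prod B {P w} B"
        using tits_main[OF m ja Ww, of b] b unfolding x se P_def B_def by simp
    qed
    show "set_prod {P s} B \<noteq> set_prod B {P s}" using sB_neq[OF m ja] unfolding se P_def B_def .
  qed
  show ?thesis using c1 c2 c3 c4 c5 c6 c7 c8 c9 c10 c11 c12 c13 c14 c15 c16 c17 c18 c19 by blast
qed

end
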